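(* Let $f\colon X\to X$ be a homeomorphism of a compact metric space with the L-shadowing property and let $C$ be a chain recurrent class of $f$. Then there exist $n\ge1$ and pairwise disjoint compact sets $C_1,\dots,C_n\subset C$, each $f^n$-invariant, such that $C=\bigcup_{i=1}^n C_i$, $f(C_i)=C_{(i+1)\bmod n}$, and for each $i$ the restriction $f^n|_{C_i}$ is topologically mixing and has the two-sided limit shadowing property.
   Context: L-shadowing: for every $\varepsilon>0$ there is $\delta>0$ such that every sequence $(x_k)_{k\in\mathbb{Z}}$ with $d(f(x_k),x_{k+1})\le\delta$ for all $k$ and $d(f(x_k),x_{k+1})\to0$ as $|k|\to\infty$ admits $z$ with $d(f^k(z),x_k)\le\varepsilon$ for all $k$ and $d(f^k(z),x_k)\to0$ as $|k|\to\infty$. A $\varepsilon$-pseudo orbit is a sequence with $d(f(x_k),x_{k+1})<\varepsilon$; the chain recurrent class of $x$ is the set of $y$ such that for every $\varepsilon>0$ there is a periodic $\varepsilon$-pseudo orbit containing $x$ and $y$. A homeomorphism $g$ of a compact metric space $Y$ has the two-sided limit shadowing property if for every sequence $(y_k)_{k\in\mathbb{Z}}$ with $d(g(y_k),y_{k+1})\to0$ as $|k|\to\infty$ there is $y\in Y$ with $d(g^k(y),y_k)\to0$ as $|k|\to\infty$. Topologically mixing: for all nonempty open $U,V$ there is $N$ with $g^k(U)\cap V\ne\emptyset$ for all $k\ge N$. *)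

theory Defs
  imports "HOL-Analysis.Analysis"
begin

definition ipow :: "'a set \<Rightarrow> ('a \<Rightarrow> 'a) \<Rightarrow> int \<Rightarrow> 'a \<Rightarrow> 'a" where
  "ipow X f k x = (if k \<ge> 0 then (f ^^ nat k) x else (inv_into X f ^^ nat (- k)) x)"

definition tendsto0_both :: "(int \<Rightarrow> real) \<Rightarrow> bool" where
  "tendsto0_both a \<longleftrightarrow> (a \<longlongrightarrow> 0) at_top \<and> (a \<longlongrightarrow> 0) at_bot"

definition L_shadowing :: "'a::metric_space set \<Rightarrow> ('a \<Rightarrow> 'a) \<Rightarrow> bool" where
  "L_shadowing X f \<longleftrightarrow>
     (\<forall>\<epsilon>>0. \<exists>\<delta>>0. \<forall>x::int \<Rightarrow> 'a.
        (\<forall>k. x k \<in> X) \<and> (\<forall>k. dist (f (x k)) (x (k + 1)) \<le> \<delta>) \<and>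
        tendsto0_both (\<lambda>k. dist (f (x k)) (x (k + 1)))
        \<longrightarrow> (\<exists>z\<in>X. (\<forall>k. dist (ipow X f k z) (x k) \<le> \<epsilon>) \<and>
                    tendsto0_both (\<lambda>k. dist (ipow X f k z) (x k))))"

definition periodic_pseudo_orbit_through ::
  "'a::metric_space set \<Rightarrow> ('a \<Rightarrow> 'a) \<Rightarrow> real \<Rightarrow> 'a \<Rightarrow> 'a \<Rightarrow> bool" where
  "periodic_pseudo_orbit_through X f \<epsilon> x y \<longleftrightarrow>
     (\<exists>m::nat. \<exists>p::nat \<Rightarrow> 'a. m \<ge> 1 \<and> (\<forall>i. p i \<in> X) \<and> (\<forall>i. p (i + m) = p i) \<and>
        (\<forall>i. dist (f (p i)) (p (Suc i)) < \<epsilon>) \<and> x \<in> range p \<and> y \<in> range p)"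

definition chain_class :: "'a::metric_space set \<Rightarrow> ('a \<Rightarrow> 'a) \<Rightarrow> 'a \<Rightarrow> 'a set" where
  "chain_class X f x = {y \<in> X. \<forall>\<epsilon>>0. periodic_pseudo_orbit_through X f \<epsilon> x y}"

definition chain_recurrent_class :: "'a::metric_space set \<Rightarrow> ('a \<Rightarrow> 'a) \<Rightarrow> 'a set \<Rightarrow> bool" where
  "chain_recurrent_class X f C \<longleftrightarrow> (\<exists>x\<in>X. x \<in> chain_class X f x \<and> C = chain_class X f x)"

definition topologically_mixing :: "'a::metric_space set \<Rightarrow> ('a \<Rightarrow> 'a) \<Rightarrow> bool" where
  "topologically_mixing Y g \<longleftrightarrow>
     (\<forall>U V. openin (top_of_set Y) U \<and> openin (top_of_set Y) V \<and> U \<noteq> {} \<and> V \<noteq> {}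
        \<longrightarrow> (\<exists>N. \<forall>k\<ge>N. (g ^^ k) ` U \<inter> V \<noteq> {}))"

definition two_sided_limit_shadowing :: "'a::metric_space set \<Rightarrow> ('a \<Rightarrow> 'a) \<Rightarrow> bool" where
  "two_sided_limit_shadowing Y g \<longleftrightarrow>
     (\<forall>y::int \<Rightarrow> 'a. (\<forall>k. y k \<in> Y) \<and> tendsto0_both (\<lambda>k. dist (g (y k)) (y (k + 1)))
        \<longrightarrow> (\<exists>z\<in>Y. tendsto0_both (\<lambda>k. dist (ipow Y g k z) (y k))))"

end

theory Submission
  imports Defs
begin

lemma semigroup_period:
  fixes S :: "nat set"
  assumes add: "\<And>a b. a\<in>S \<Longrightarrow> b\<in>S \<Longrightarrow> a+b\<in>S" and s0: "s0 \<in> S" and pos: "\<And>a. a\<in>S \<Longrightarrow> a \<ge> 1"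
  defines "d \<equiv> LEAST d. d>0 \<and> (\<exists>a\<in>S. \<exists>b\<in>S. a = b + d)"
  shows "d > 0 \<and> (\<forall>s\<in>S. d dvd s) \<and> (\<exists>N. \<forall>k\<ge>N. k*d \<in> S)"
proof -
  let ?P = "\<lambda>d. d>0 \<and> (\<exists>a\<in>S. \<exists>b\<in>S. a = b + d)"
  have "?P s0" using s0 pos[OF s0] add[OF s0 s0] by auto
  then have Pd: "?P d" unfolding d_def by (rule LeastI)
  then obtain a1 b where ab: "a1 \<in> S" "b \<in> S" "a1 = b + d" by blast
  have dpos: "d > 0" using Pd by blast
  have sums: "\<forall>j\<le>Suc k. Suc k * b + j * d \<in> S" for k
  proof (induction k)
    case 0
    show ?case
    proof (intro allI impI)
      fix j :: nat assume "j \<le> Suc 0"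
      then have "j = 0 \<or> j = 1" by auto
      then show "Suc 0 * b + j * d \<in> S" using ab by auto
    qed
  next
    case (Suc k)
    show ?case
    proof (intro allI impI)
      fix j assume j: "j \<le> Suc (Suc k)"
      show "Suc (Suc k) * b + j * d \<in> S"
      proof (cases "j \<le> Suc k")
        case True
        have "Suc (Suc k) * b + j * d = (Suc k * b + j * d) + b" by simp
        then show ?thesis using add Suc True ab by metis
      next
        case False
        then have "j = Suc (Suc k)" using j by simp
        then have "Suc (Suc k) * b + j * d = (Suc k * b + Suc k * d) + a1" using ab by (simp add: algebra_simps)
        then show ?thesis using add Suc ab by (metis order_refl)
      qed
    qed
  qed
  have dvd: "d dvd s" if s: "s \<in> S" for s
  proof (rule ccontr)
    assume nd: "\<not> d dvd s"
    define q where "q = s div d"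
    define r where "r = s mod d"
    have r: "r > 0" "r < d" using nd dpos unfolding r_def using dvd_eq_mod_eq_0 by auto
    have "q \<le> Suc s" unfolding q_def by (meson div_le_dividend le_SucI)
    then have X1: "Suc s * b + q * d \<in> S" using sums by blast
    have "Suc s * b + 0 * d \<in> S" using sums by blast
    then have Y: "s + Suc s * b \<in> S" using add s by simp
    have "s + Suc s * b = (Suc s * b + q * d) + r" unfolding q_def r_def
      by (metis add.commute add.left_commute div_mult_mod_eq)
    then have "?P r" using X1 Y r by metis
    then show False using not_less_Least[of r ?P] r unfolding d_def by blast
  qed
  have "d dvd b" using dvd ab by blast
  then obtain \<beta> where \<beta>: "b = \<beta> * d" by (metis dvd_def mult.commute)
  have \<beta>1: "\<beta> \<ge> 1" using pos[OF ab(2)] \<beta> by (cases \<beta>) auto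
  have "k * d \<in> S" if k: "k \<ge> \<beta> * \<beta>" for k
  proof -
    define k' where "k' = k div \<beta>"
    define j where "j = k mod \<beta>"
    have "k' \<ge> \<beta>" unfolding k'_def using k \<beta>1
      by (metis div_le_mono nonzero_mult_div_cancel_left not_one_le_zero)
    moreover have "j < \<beta>" unfolding j_def using \<beta>1 by simp
    ultimately have jk: "j \<le> k'" by simp
    have k1: "k' \<ge> 1" using \<open>k' \<ge> \<beta>\<close> \<beta>1 by simp
    then obtain k0 where k0: "k' = Suc k0" by (metis Suc_pred' less_le_trans zero_less_one)
    have "k * d = k' * b + j * d" unfolding k'_def j_def \<beta>
      by (metis add_mult_distrib div_mult_mod_eq mult.assoc mult.commute)
    then show ?thesis using sums[of k0] jk k0 by simp
  qed
  then show ?thesis using dpos dvd by blast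
qed

locale LS =
  fixes X :: "'a::metric_space set" and f g :: "'a \<Rightarrow> 'a"
  assumes compX: "compact X" and hom: "homeomorphism X X f g" and Ls: "L_shadowing X f"
begin

lemma fX: "x \<in> X \<Longrightarrow> f x \<in> X" using hom unfolding homeomorphism_def by blast
lemma gX: "x \<in> X \<Longrightarrow> g x \<in> X" using hom unfolding homeomorphism_def by blast
lemma gf: "x \<in> X \<Longrightarrow> g (f x) = x" using hom unfolding homeomorphism_def by blast
lemma fg: "x \<in> X \<Longrightarrow> f (g x) = x" using hom unfolding homeomorphism_def by blast
lemma injf: "inj_on f X" by (metis gf inj_on_inverseI)
lemma contf: "continuous_on X f" using hom unfolding homeomorphism_def by blast
lemma contg: "continuous_on X g" using hom unfolding homeomorphism_def by blast

lemma fpowX: "x \<in> X \<Longrightarrow> (f^^k) x \<in> X" by (induction k) (auto simp: fX)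
lemma gpowX: "x \<in> X \<Longrightarrow> (g^^k) x \<in> X" by (induction k) (auto simp: gX)
lemma fgpow: "x \<in> X \<Longrightarrow> (f^^k) ((g^^k) x) = x"
proof (induction k arbitrary: x)
  case (Suc k) then show ?case by (simp add: funpow_Suc_right del: funpow.simps) (metis fg gX gpowX funpow_swap1)
qed simp

lemma invf: "x \<in> X \<Longrightarrow> inv_into X f x = g x"
  by (metis fg gX injf inv_into_f_eq)

lemma invpow: "x \<in> X \<Longrightarrow> (inv_into X f ^^ k) x = (g^^k) x"
proof (induction k)
  case (Suc k) then show ?case by (simp add: invf gpowX)
qed simp

lemma ipow_pos: "ipow X f (int k) x = (f^^k) x" by (simp add: ipow_def)
lemma ipow_neg: "x \<in> X \<Longrightarrow> ipow X f (- int k) x = (g^^k) x" by (simp add: ipow_def invpow)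
lemma ipowX: "x \<in> X \<Longrightarrow> ipow X f j x \<in> X"
  by (cases "j \<ge> 0") (auto simp: ipow_def invpow fpowX gpowX)

lemma ipow_f: assumes "x \<in> X" shows "f (ipow X f j x) = ipow X f (j+1) x"
proof (cases "j \<ge> 0")
  case True
  then obtain k where k: "j = int k" by (metis nonneg_eq_int)
  have "ipow X f (j+1) x = (f^^(Suc k)) x" using ipow_pos[of "Suc k" x] k by (simp add: add.commute)
  then show ?thesis using k ipow_pos[of k x] by simp
next
  case False
  define k where "k = nat (-j) - 1"
  have k: "j = - int (Suc k)" using False unfolding k_def by simp
  have "f (ipow X f j x) = f ((g^^Suc k) x)" using k ipow_neg[OF assms, of "Suc k"] by simp
  also have "\<dots> = (g^^k) x" using fg gpowX assms by simp
  also have "\<dots> = ipow X f (j+1) x" using k ipow_neg[OF assms, of k] by simp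
  finally show ?thesis .
qed

lemma unif_f: assumes "e > 0" shows "\<exists>d>0. \<forall>a\<in>X. \<forall>b\<in>X. dist a b < d \<longrightarrow> dist (f a) (f b) < e"
  using compact_uniformly_continuous[OF contf compX] assms unfolding uniformly_continuous_on_def
  by (metis dist_commute)
lemma unif_g: assumes "e > 0" shows "\<exists>d>0. \<forall>a\<in>X. \<forall>b\<in>X. dist a b < d \<longrightarrow> dist (g a) (g b) < e"
  using compact_uniformly_continuous[OF contg compX] assms unfolding uniformly_continuous_on_def
  by (metis dist_commute)

definition chain :: "real \<Rightarrow> 'a \<Rightarrow> 'a \<Rightarrow> nat \<Rightarrow> bool" where
  "chain e a b L \<longleftrightarrow> (\<exists>q. q 0 = a \<and> q L = b \<and> (\<forall>j\<le>L. q j \<in> X) \<and> (\<forall>j<L. dist (f (q j)) (q (Suc j)) < e))"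

lemma chainX: "chain e a b L \<Longrightarrow> a \<in> X \<and> b \<in> X" unfolding chain_def by auto

lemma chain_refl: "a \<in> X \<Longrightarrow> chain e a a 0" unfolding chain_def by (rule exI[of _ "\<lambda>_. a"]) auto

lemma chain_one: "a \<in> X \<Longrightarrow> c \<in> X \<Longrightarrow> dist (f a) c < e \<Longrightarrow> chain e a c 1"
  unfolding chain_def by (rule exI[of _ "\<lambda>j. if j = 0 then a else c"]) auto

lemma chain_mono: assumes "chain e a b L" "e \<le> e'" shows "chain e' a b L"
proof -
  obtain q where q: "q 0 = a" "q L = b" "\<forall>j\<le>L. q j \<in> X" "\<forall>j<L. dist (f (q j)) (q (Suc j)) < e"
    using assms(1) unfolding chain_def by blast
  have "\<forall>j<L. dist (f (q j)) (q (Suc j)) < e'" using q(4) assms(2) by force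
  then show ?thesis using q unfolding chain_def by blast
qed

lemma chain_trans: assumes "chain e a b L" "chain e b c M" shows "chain e a c (L+M)"
proof -
  obtain q where q: "q 0 = a" "q L = b" "\<forall>j\<le>L. q j \<in> X" "\<forall>j<L. dist (f (q j)) (q (Suc j)) < e"
    using assms(1) unfolding chain_def by blast
  obtain p where p: "p 0 = b" "p M = c" "\<forall>j\<le>M. p j \<in> X" "\<forall>j<M. dist (f (p j)) (p (Suc j)) < e"
    using assms(2) unfolding chain_def by blast
  define r where "r j = (if j \<le> L then q j else p (j - L))" for j
  have "r 0 = a" "r (L+M) = c" using q p by (auto simp: r_def)
  moreover have "\<forall>j\<le>L+M. r j \<in> X" using q p by (auto simp: r_def)
  moreover have "\<forall>j<L+M. dist (f (r j)) (r (Suc j)) < e"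
  proof (intro allI impI)
    fix j assume j: "j < L + M"
    show "dist (f (r j)) (r (Suc j)) < e"
    proof (cases "j < L")
      case True then show ?thesis using q by (auto simp: r_def)
    next
      case False
      then have "r j = p (j - L)" "r (Suc j) = p (Suc (j - L))"
        using q p by (auto simp: r_def Suc_diff_le)
      then show ?thesis using p j False by auto
    qed
  qed
  ultimately show ?thesis unfolding chain_def by blast
qed

lemma chain_step: "chain e a b L \<Longrightarrow> c \<in> X \<Longrightarrow> dist (f b) c < e \<Longrightarrow> chain e a c (Suc L)"
  using chain_trans[OF _ chain_one] chainX by fastforce

lemma chain_orbit: "a \<in> X \<Longrightarrow> e > 0 \<Longrightarrow> chain e a ((f^^k) a) k"
proof (induction k)
  case 0 then show ?case by (simp add: chain_refl)
next
  case (Suc k) then show ?case using chain_step[of e a "(f^^k) a" k "(f^^Suc k) a"] fpowX[of a "Suc k"] by simp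
qed

lemma chain_end: assumes "chain e a b L" "1 \<le> L" "b' \<in> X" "dist b b' < e'"
  shows "chain (e + e') a b' L"
proof -
  obtain q where q: "q 0 = a" "q L = b" "\<forall>j\<le>L. q j \<in> X" "\<forall>j<L. dist (f (q j)) (q (Suc j)) < e"
    using assms(1) unfolding chain_def by blast
  define r where "r = q(L := b')"
  have "r 0 = a" "r L = b'" using q assms(2) by (auto simp: r_def)
  moreover have "\<forall>j\<le>L. r j \<in> X" using q assms by (auto simp: r_def)
  moreover have "\<forall>j<L. dist (f (r j)) (r (Suc j)) < e + e'"
  proof (intro allI impI)
    fix j assume j: "j < L"
    show "dist (f (r j)) (r (Suc j)) < e + e'"
    proof (cases "Suc j = L")
      case True
      then have "dist (f (r j)) (r (Suc j)) = dist (f (q j)) b'" using j by (auto simp: r_def)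
      also have "\<dots> \<le> dist (f (q j)) b + dist b b'" by (rule dist_triangle)
      also have "\<dots> < e + e'" using q j True assms(4) by (metis add_strict_mono)
      finally show ?thesis .
    next
      case False
      then show ?thesis using q j assms(4) by (auto simp: r_def) (smt (verit) zero_le_dist)
    qed
  qed
  ultimately show ?thesis unfolding chain_def by blast
qed

lemma chain_drop: assumes "chain e a b L" "1 \<le> L"
  shows "\<exists>c\<in>X. dist (f a) c < e \<and> chain e c b (L - 1)"
proof -
  obtain q where q: "q 0 = a" "q L = b" "\<forall>j\<le>L. q j \<in> X" "\<forall>j<L. dist (f (q j)) (q (Suc j)) < e"
    using assms(1) unfolding chain_def by blast
  have "chain e (q 1) b (L - 1)" unfolding chain_def
    by (rule exI[of _ "\<lambda>j. q (Suc j)"]) (use q assms(2) in auto)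
  then show ?thesis using q assms(2) by (metis One_nat_def le_simps(3) less_numeral_extra(1) not_less_eq_eq)
qed

lemma chain_start: assumes "chain e a b L" "1 \<le> L" "a' \<in> X" "dist (f a') (f a) < e'"
  shows "chain (e + e') a' b L"
proof -
  obtain c where c: "c \<in> X" "dist (f a) c < e" "chain e c b (L - 1)" using chain_drop[OF assms(1,2)] by blast
  have "dist (f a') c < e + e'" using dist_triangle[of "f a'" c "f a"] c(2) assms(4) by linarith
  then have "chain (e + e') a' c 1" using chain_one assms(3) c(1) by blast
  moreover have "chain (e + e') c b (L - 1)" using chain_mono[OF c(3)] chainX assms
    by (smt (verit) dist_not_less_zero)
  ultimately show ?thesis using chain_trans assms(2) by fastforce
qed

end

lemma t0_top: fixes a :: "int \<Rightarrow> real"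
  assumes "(a \<longlongrightarrow> 0) at_top" "e > 0" shows "\<exists>N. \<forall>j\<ge>N. \<bar>a j\<bar> < e"
  using assms unfolding tendsto_iff eventually_at_top_linorder by (simp add: dist_real_def)
lemma t0_bot: fixes a :: "int \<Rightarrow> real"
  assumes "(a \<longlongrightarrow> 0) at_bot" "e > 0" shows "\<exists>N. \<forall>j\<le>N. \<bar>a j\<bar> < e"
  using assms unfolding tendsto_iff eventually_at_bot_linorder by (simp add: dist_real_def)
lemma t0_topI: fixes a :: "int \<Rightarrow> real"
  assumes "\<And>e. e > 0 \<Longrightarrow> \<exists>N. \<forall>j\<ge>N. \<bar>a j\<bar> < e" shows "(a \<longlongrightarrow> 0) at_top"
  using assms unfolding tendsto_iff eventually_at_top_linorder by (simp add: dist_real_def)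
lemma t0_botI: fixes a :: "int \<Rightarrow> real"
  assumes "\<And>e. e > 0 \<Longrightarrow> \<exists>N. \<forall>j\<le>N. \<bar>a j\<bar> < e" shows "(a \<longlongrightarrow> 0) at_bot"
  using assms unfolding tendsto_iff eventually_at_bot_linorder by (simp add: dist_real_def)

lemma periodic_mult: fixes m k :: nat assumes "\<forall>i. p (i + m) = p i" shows "p (i + m * k) = p i"
proof (induction k)
  case (Suc k)
  have "p (i + m * Suc k) = p ((i + m * k) + m)" by (simp add: algebra_simps)
  then show ?case using assms Suc by simp
qed simp

context LS begin

lemma ppo_chain: assumes "periodic_pseudo_orbit_through X f e x y"
  shows "\<exists>L. chain e x y L"
proof -
  obtain m p where mp: "m \<ge> 1" "\<forall>i. p i \<in> X" "\<forall>i. p (i + m) = p i"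
    "\<forall>i. dist (f (p i)) (p (Suc i)) < e" "x \<in> range p" "y \<in> range p"
    using assms unfolding periodic_pseudo_orbit_through_def by blast
  obtain s t where st: "x = p s" "y = p t" using mp by blast
  have ms: "m * s \<ge> s" using mp(1) by simp
  define L where "L = m * s + t - s"
  have "s + L = t + m * s" unfolding L_def using ms by linarith
  then have "p (s + L) = p (t + m * s)" by simp
  also have "\<dots> = y" using periodic_mult[OF mp(3)] st by simp
  finally have "chain e x y L" unfolding chain_def
    by (intro exI[of _ "\<lambda>j. p (s + j)"]) (use mp st in auto)
  then show ?thesis by blast
qed

lemma ppo_cycle: assumes "periodic_pseudo_orbit_through X f e x y"
  shows "\<exists>m\<ge>1. chain e x x m"
proof -
  obtain m p where mp: "m \<ge> 1" "\<forall>i. p i \<in> X" "\<forall>i. p (i + m) = p i"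
    "\<forall>i. dist (f (p i)) (p (Suc i)) < e" "x \<in> range p" "y \<in> range p"
    using assms unfolding periodic_pseudo_orbit_through_def by blast
  obtain s where st: "x = p s" using mp by blast
  have "chain e x x m" unfolding chain_def
    by (intro exI[of _ "\<lambda>j. p (s + j)"]) (use mp st in \<open>auto simp: add.commute\<close>)
  then show ?thesis using mp by blast
qed

lemma ppo_of_cycle: assumes "q 0 = x" "q m = x" "m \<ge> 1" "\<forall>j\<le>m. q j \<in> X"
  "\<forall>j<m. dist (f (q j)) (q (Suc j)) < e" "y = q t" "t \<le> m"
  shows "periodic_pseudo_orbit_through X f e x y"
proof -
  define p where "p i = q (i mod m)" for i
  have "\<forall>i. p i \<in> X" using assms(3,4) by (simp add: p_def)
  moreover have "\<forall>i. p (i + m) = p i" by (simp add: p_def)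
  moreover have "\<forall>i. dist (f (p i)) (p (Suc i)) < e"
  proof
    fix i
    have lt: "i mod m < m" using assms(3) by simp
    show "dist (f (p i)) (p (Suc i)) < e"
    proof (cases "Suc (i mod m) = m")
      case True
      then have "Suc i mod m = 0" by (metis mod_Suc mod_self)
      then have "p (Suc i) = q (Suc (i mod m))" using True assms(1,2) by (simp add: p_def)
      then show ?thesis using assms(5) lt by (simp add: p_def)
    next
      case False
      then have "Suc i mod m = Suc (i mod m)" by (simp add: mod_Suc)
      then show ?thesis using assms(5) lt by (simp add: p_def)
    qed
  qed
  moreover have "x \<in> range p" using assms(1) by (metis mod_0 p_def rangeI)
  moreover have "y \<in> range p"
  proof (cases "t = m")
    case True then show ?thesis using assms by (metis mod_0 p_def rangeI)
  next
    case False then have "t < m" using assms(7) by simp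
    then show ?thesis using assms(6) by (metis mod_less p_def rangeI)
  qed
  ultimately show ?thesis unfolding periodic_pseudo_orbit_through_def using assms(3) by blast
qed

lemma ppo_of_chains: assumes "chain e x y a" "chain e y x b" "1 \<le> a + b"
  shows "periodic_pseudo_orbit_through X f e x y"
proof -
  obtain q where q: "q 0 = x" "q a = y" "\<forall>j\<le>a. q j \<in> X" "\<forall>j<a. dist (f (q j)) (q (Suc j)) < e"
    using assms(1) unfolding chain_def by blast
  obtain p where p: "p 0 = y" "p b = x" "\<forall>j\<le>b. p j \<in> X" "\<forall>j<b. dist (f (p j)) (p (Suc j)) < e"
    using assms(2) unfolding chain_def by blast
  define r where "r j = (if j \<le> a then q j else p (j - a))" for j
  have "r 0 = x" "r (a+b) = x" "r a = y" using q p by (auto simp: r_def)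
  moreover have "\<forall>j\<le>a+b. r j \<in> X" using q p by (auto simp: r_def)
  moreover have "\<forall>j<a+b. dist (f (r j)) (r (Suc j)) < e"
  proof (intro allI impI)
    fix j assume j: "j < a + b"
    show "dist (f (r j)) (r (Suc j)) < e"
    proof (cases "j < a")
      case True then show ?thesis using q by (auto simp: r_def)
    next
      case False
      then have "r j = p (j - a)" "r (Suc j) = p (Suc (j - a))"
        using q p by (auto simp: r_def Suc_diff_le)
      then show ?thesis using p j False by auto
    qed
  qed
  ultimately show ?thesis using ppo_of_cycle[of r x "a+b" e y a] assms(3) by simp
qed

end

locale LSC = LS +
  fixes x0 assumes x0C: "x0 \<in> chain_class X f x0"
begin

abbreviation "C \<equiv> chain_class X f x0"

lemma x0X: "x0 \<in> X" using x0C unfolding chain_class_def by blast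

lemma CX: "w \<in> C \<Longrightarrow> w \<in> X" unfolding chain_class_def by blast

lemma cyc: "e > 0 \<Longrightarrow> \<exists>m\<ge>1. chain e x0 x0 m"
  using x0C ppo_cycle unfolding chain_class_def by blast

lemma inC_iff: "w \<in> C \<longleftrightarrow> w \<in> X \<and> (\<forall>e>0. (\<exists>a. chain e x0 w a) \<and> (\<exists>b. chain e w x0 b))"
proof
  assume "w \<in> C"
  then show "w \<in> X \<and> (\<forall>e>0. (\<exists>a. chain e x0 w a) \<and> (\<exists>b. chain e w x0 b))"
  proof -
    have "w \<in> X" using \<open>w \<in> C\<close> CX by blast
    moreover have "(\<exists>a. chain e x0 w a) \<and> (\<exists>b. chain e w x0 b)" if "e > 0" for e
    proof -
      have P: "periodic_pseudo_orbit_through X f e x0 w" using \<open>w \<in> C\<close> that unfolding chain_class_def by blast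
      then have "periodic_pseudo_orbit_through X f e w x0" unfolding periodic_pseudo_orbit_through_def by blast
      then show ?thesis using P ppo_chain by blast
    qed
    ultimately show ?thesis by blast
  qed
next
  assume H: "w \<in> X \<and> (\<forall>e>0. (\<exists>a. chain e x0 w a) \<and> (\<exists>b. chain e w x0 b))"
  have "periodic_pseudo_orbit_through X f e x0 w" if "e > 0" for e
  proof -
    have "(\<exists>a. chain e x0 w a) \<and> (\<exists>b. chain e w x0 b)" using H that by simp
    then obtain a b where ab: "chain e x0 w a" "chain e w x0 b" by blast
    show ?thesis
    proof (cases "1 \<le> a + b")
      case True then show ?thesis using ppo_of_chains ab by blast
    next
      case False
      then have "a = 0" by simp
      then have "w = x0" using ab(1) unfolding chain_def by auto
      then show ?thesis using x0C that unfolding chain_class_def by blast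
    qed
  qed
  then show "w \<in> C" using H unfolding chain_class_def by blast
qed

lemma inC_to: "w \<in> C \<Longrightarrow> e > 0 \<Longrightarrow> \<exists>a. chain e x0 w a" using inC_iff by blast
lemma inC_from: "w \<in> C \<Longrightarrow> e > 0 \<Longrightarrow> \<exists>b. chain e w x0 b" using inC_iff by blast

lemma padL: assumes "chain e x0 w a" "e > 0" shows "\<exists>m\<ge>1. chain e x0 x0 m \<and> chain e x0 w (m + a)"
proof -
  obtain m where "m \<ge> 1" "chain e x0 x0 m" using cyc assms(2) by blast
  then show ?thesis using chain_trans[OF _ assms(1)] by blast
qed
lemma padR: assumes "chain e w x0 b" "e > 0" shows "\<exists>m\<ge>1. chain e x0 x0 m \<and> chain e w x0 (b + m)"
proof -
  obtain m where "m \<ge> 1" "chain e x0 x0 m" using cyc assms(2) by blast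
  then show ?thesis using chain_trans[OF assms(1)] by blast
qed

lemma chain_drop_last: assumes "chain e a b L" "1 \<le> L"
  shows "\<exists>c\<in>X. dist (f c) b < e \<and> chain e a c (L - 1)"
proof -
  obtain q where q: "q 0 = a" "q L = b" "\<forall>j\<le>L. q j \<in> X" "\<forall>j<L. dist (f (q j)) (q (Suc j)) < e"
    using assms(1) unfolding chain_def by blast
  have "chain e a (q (L - 1)) (L - 1)" unfolding chain_def
    by (rule exI[of _ q]) (use q assms(2) in auto)
  moreover have "dist (f (q (L - 1))) b < e"
  proof -
    have "Suc (L - 1) = L" "L - 1 < L" using assms(2) by auto
    then show ?thesis using q(2,4) by metis
  qed
  ultimately show ?thesis using q assms(2) by auto
qed

lemma C_f: assumes "w \<in> C" shows "f w \<in> C"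
proof -
  have wX: "w \<in> X" using assms CX by blast
  have "(\<exists>a. chain e x0 (f w) a) \<and> (\<exists>b. chain e (f w) x0 b)" if e: "e > 0" for e
  proof
    obtain a where "chain e x0 w a" using inC_to assms e by blast
    then show "\<exists>a. chain e x0 (f w) a" using chain_step fX wX e by fastforce
  next
    obtain \<delta> where \<delta>: "\<delta> > 0" "\<forall>a\<in>X. \<forall>b\<in>X. dist a b < \<delta> \<longrightarrow> dist (f a) (f b) < e/2"
      using unif_f[of "e/2"] e by auto
    define d where "d = min \<delta> (e/2)"
    have d: "d > 0" "d \<le> \<delta>" "d \<le> e/2" using \<delta> e by (auto simp: d_def)
    obtain b where "chain d w x0 b" using inC_from assms d by blast
    then obtain m where m: "m \<ge> 1" "chain d x0 x0 m" "chain d w x0 (b + m)" using padR d by blast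
    then have "chain d w x0 (b + m + m)" using chain_trans[OF m(3) m(2)] by blast
    then obtain c where c: "c \<in> X" "dist (f w) c < d" "chain d c x0 (b + m + m - 1)"
      using chain_drop[of d w x0 "b+m+m"] m(1) by auto
    have "dist (f (f w)) (f c) < e/2" using \<delta> c d fX wX by auto
    then have "chain (d + e/2) (f w) x0 (b + m + m - 1)"
      using chain_start[OF c(3) _ fX[OF wX]] m(1) by (simp add: dist_commute)
    then have "chain e (f w) x0 (b + m + m - 1)" by (rule chain_mono) (use d in simp)
    then show "\<exists>b. chain e (f w) x0 b" by blast
  qed
  then show ?thesis using inC_iff fX wX by blast
qed

lemma C_g: assumes "w \<in> C" shows "g w \<in> C"
proof -
  have wX: "w \<in> X" using assms CX by blast
  have "(\<exists>a. chain e x0 (g w) a) \<and> (\<exists>b. chain e (g w) x0 b)" if e: "e > 0" for e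
  proof
    obtain b where "chain e w x0 b" using inC_from assms e by blast
    moreover have "chain e (g w) w 1" using chain_one gX wX fg e by simp
    ultimately show "\<exists>b. chain e (g w) x0 b" using chain_trans[of e "g w" w 1] by blast
  next
    obtain \<delta> where \<delta>: "\<delta> > 0" "\<forall>a\<in>X. \<forall>b\<in>X. dist a b < \<delta> \<longrightarrow> dist (g a) (g b) < e/2"
      using unif_g[of "e/2"] e by auto
    define d where "d = min \<delta> (e/2)"
    have d: "d > 0" "d \<le> \<delta>" "d \<le> e/2" using \<delta> e by (auto simp: d_def)
    obtain a where "chain d x0 w a" using inC_to assms d by blast
    then obtain m where m: "m \<ge> 1" "chain d x0 x0 m" "chain d x0 w (m + a)" using padL d by blast
    then have "chain d x0 w (m + (m + a))" using chain_trans[OF m(2) m(3)] by blast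
    then obtain c where c: "c \<in> X" "dist (f c) w < d" "chain d x0 c (m + (m + a) - 1)"
      using chain_drop_last[of d x0 w "m + (m+a)"] m(1) by auto
    have "dist (g (f c)) (g w) < e/2" using \<delta> c d fX wX by auto
    then have "dist c (g w) < e/2" using gf c by simp
    then have "chain (d + e/2) x0 (g w) (m + (m + a) - 1)"
      using chain_end[OF c(3) _ gX[OF wX]] m(1) by simp
    then have "chain e x0 (g w) (m + (m + a) - 1)" by (rule chain_mono) (use d in simp)
    then show "\<exists>a. chain e x0 (g w) a" by blast
  qed
  then show ?thesis using inC_iff gX wX by blast
qed

lemma C_fpow: "w \<in> C \<Longrightarrow> (f^^k) w \<in> C" by (induction k) (auto simp: C_f)
lemma C_gpow: "w \<in> C \<Longrightarrow> (g^^k) w \<in> C" by (induction k) (auto simp: C_g)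
lemma C_ipow: assumes "w \<in> C" shows "ipow X f j w \<in> C"
proof (cases "j \<ge> 0")
  case True
  then obtain k where "j = int k" by (metis nonneg_eq_int)
  then show ?thesis using C_fpow assms ipow_pos by simp
next
  case False
  define k where "k = nat (-j)"
  have "j = - int k" using False unfolding k_def by simp
  then show ?thesis using C_gpow assms ipow_neg CX by simp
qed

lemma asym_C: assumes zX: "z \<in> X" and J: "\<forall>j. (j \<le> -J \<or> j \<ge> J) \<longrightarrow> x j \<in> C"
  and T: "tendsto0_both (\<lambda>j. dist (ipow X f j z) (x j))"
  shows "z \<in> C"
proof -
  have "(\<exists>a. chain e x0 z a) \<and> (\<exists>b. chain e z x0 b)" if e: "e > 0" for e
  proof
    obtain N where N: "\<forall>j\<le>N. dist (ipow X f j z) (x j) < e/2"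
      using t0_bot[of "\<lambda>j. dist (ipow X f j z) (x j)" "e/2"] T e unfolding tendsto0_both_def by auto
    define k where "k = nat (- min N (-\<bar>J\<bar>))"
    define j where "j = min N (-\<bar>J\<bar>)"
    have jk: "j = - int k" unfolding k_def j_def by (simp add: J)
    have xj: "x j \<in> C" using J unfolding j_def by simp
    have dj: "dist (ipow X f j z) (x j) < e/2" using N unfolding j_def by simp
    obtain a where "chain (e/2) x0 (x j) a" using inC_to xj e by fastforce
    then obtain m where m: "m \<ge> 1" "chain (e/2) x0 (x j) (m + a)" using padL e by fastforce
    have "chain (e/2 + e/2) x0 (ipow X f j z) (m + a)"
      using chain_end[OF m(2) _ ipowX[OF zX], of j "e/2"] m(1) dj by (simp add: dist_commute)
    then have c1: "chain e x0 ((g^^k) z) (m + a)" using jk ipow_neg zX by simp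
    have "chain e ((g^^k) z) ((f^^k) ((g^^k) z)) k" using chain_orbit gpowX zX e by blast
    then have "chain e ((g^^k) z) z k" using fgpow zX by simp
    then show "\<exists>a. chain e x0 z a" using chain_trans[OF c1] by blast
  next
    obtain \<delta> where \<delta>: "\<delta> > 0" "\<forall>a\<in>X. \<forall>b\<in>X. dist a b < \<delta> \<longrightarrow> dist (f a) (f b) < e/2"
      using unif_f[of "e/2"] e by auto
    define d where "d = min \<delta> (e/2)"
    have d: "d > 0" "d \<le> \<delta>" "d \<le> e/2" using \<delta> e by (auto simp: d_def)
    obtain N where N: "\<forall>j\<ge>N. dist (ipow X f j z) (x j) < d"
      using t0_top[of "\<lambda>j. dist (ipow X f j z) (x j)" d] T d unfolding tendsto0_both_def by auto
    define j where "j = max N (max J 0)"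
    define k where "k = nat j"
    have jk: "j = int k" unfolding k_def j_def by simp
    have xj: "x j \<in> C" using J unfolding j_def by simp
    have dj: "dist (ipow X f j z) (x j) < d" using N unfolding j_def by simp
    obtain b where "chain d (x j) x0 b" using inC_from xj d by fastforce
    then obtain m where m: "m \<ge> 1" "chain d (x j) x0 (b + m)" using padR d by fastforce
    have "dist (f (ipow X f j z)) (f (x j)) < e/2" using \<delta> dj d ipowX zX CX xj by auto
    then have "chain (d + e/2) (ipow X f j z) x0 (b + m)"
      using chain_start[OF m(2) _ ipowX[OF zX]] m(1) by simp
    then have c2: "chain e ((f^^k) z) x0 (b + m)" using jk ipow_pos chain_mono d by fastforce
    have "chain e z ((f^^k) z) k" using chain_orbit zX e by blast
    then show "\<exists>b. chain e z x0 b" using chain_trans[OF _ c2] by blast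
  qed
  then show ?thesis using inC_iff zX by blast
qed

end

lemma mod_cancel_nat: "((i::nat) + K) mod p = (j + K) mod p \<Longrightarrow> i mod p = j mod p"
  by (simp add: nat_mod_eq_iff)
lemma dvd_mod_eq: "(d::nat) dvd a + c \<Longrightarrow> d dvd b + c \<Longrightarrow> a mod d = b mod d"
  by (smt (verit, best) add.assoc add.commute add_0 dvd_imp_mod_0 mod_add_left_eq)

context LSC begin

definition Scyc :: "real \<Rightarrow> nat set" where "Scyc e = {m. m \<ge> 1 \<and> chain e x0 x0 m}"
definition per :: "real \<Rightarrow> nat" where
  "per e = (LEAST d. d>0 \<and> (\<exists>a\<in>Scyc e. \<exists>b\<in>Scyc e. a = b + d))"

lemma per_props: assumes "e > 0"
  shows "per e > 0 \<and> (\<forall>s\<in>Scyc e. per e dvd s) \<and> (\<exists>N. \<forall>k\<ge>N. k * per e \<in> Scyc e)"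
proof -
  obtain s0 where "s0 \<ge> 1" "chain e x0 x0 s0" using cyc assms by blast
  then have s0: "s0 \<in> Scyc e" by (simp add: Scyc_def)
  have add: "a + b \<in> Scyc e" if "a \<in> Scyc e" "b \<in> Scyc e" for a b
    using that chain_trans[of e x0 x0 a x0 b] by (simp add: Scyc_def)
  have pos: "\<And>a. a \<in> Scyc e \<Longrightarrow> a \<ge> 1" by (simp add: Scyc_def)
  show ?thesis unfolding per_def using semigroup_period[OF add s0 pos] by simp
qed

lemma per_pos: "e > 0 \<Longrightarrow> per e > 0" using per_props by blast
lemma per_dvd: assumes "e > 0" "chain e x0 x0 m" shows "per e dvd m"
proof (cases "m = 0")
  case False then have "m \<in> Scyc e" using assms by (simp add: Scyc_def)
  then show ?thesis using per_props assms by blast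
qed simp
lemma per_large: assumes "e > 0" shows "\<exists>N. \<forall>k\<ge>N. chain e x0 x0 (k * per e)"
  using per_props[OF assms] unfolding Scyc_def by blast

lemma F1: assumes "e > 0" "w \<in> C" "chain e x0 w a" "chain e x0 w b"
  shows "a mod per e = b mod per e"
proof -
  obtain c where c: "chain e w x0 c" using inC_from[OF assms(2,1)] by blast
  have d1: "per e dvd a + c" using per_dvd[OF assms(1) chain_trans[OF assms(3) c]] .
  have d2: "per e dvd b + c" using per_dvd[OF assms(1) chain_trans[OF assms(4) c]] .
  show ?thesis using dvd_mod_eq[OF d1 d2] .
qed

lemma per_mono: assumes "0 < e'" "e' \<le> e" shows "per e dvd per e'"
proof -
  have e: "e > 0" using assms by simp
  obtain N where N: "\<And>k. k \<ge> N \<Longrightarrow> chain e' x0 x0 (k * per e')" using per_large[OF assms(1)] by blast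
  have c1: "chain e' x0 x0 (N * per e')" by (rule N) simp
  have c2: "chain e' x0 x0 (Suc N * per e')" by (rule N) simp
  have "per e dvd N * per e'" using per_dvd[OF e chain_mono[OF c1 assms(2)]] .
  moreover have "per e dvd Suc N * per e'" using per_dvd[OF e chain_mono[OF c2 assms(2)]] .
  ultimately have "per e dvd Suc N * per e' - N * per e'" using dvd_diff_nat by blast
  then show ?thesis by simp
qed

lemma coh: "\<exists>r>0. \<forall>u\<in>C. \<forall>y\<in>C. dist u y < r \<longrightarrow>
   (\<forall>e>0. \<exists>a K'. chain e x0 u a \<and> chain e x0 ((f^^K') y) (a + K'))"
proof -
  have "\<exists>\<delta>>0. \<forall>x::int \<Rightarrow> 'a.
        (\<forall>k. x k \<in> X) \<and> (\<forall>k. dist (f (x k)) (x (k + 1)) \<le> \<delta>) \<and>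
        tendsto0_both (\<lambda>k. dist (f (x k)) (x (k + 1)))
        \<longrightarrow> (\<exists>z\<in>X. (\<forall>k. dist (ipow X f k z) (x k) \<le> 1) \<and>
                    tendsto0_both (\<lambda>k. dist (ipow X f k z) (x k)))"
    using Ls unfolding L_shadowing_def by simp
  then obtain \<delta> where \<delta>: "\<delta> > 0" and Lsh: "\<And>x::int \<Rightarrow> 'a.
        (\<forall>k. x k \<in> X) \<Longrightarrow> (\<forall>k. dist (f (x k)) (x (k + 1)) \<le> \<delta>) \<Longrightarrow>
        tendsto0_both (\<lambda>k. dist (f (x k)) (x (k + 1)))
        \<Longrightarrow> (\<exists>z\<in>X. (\<forall>k. dist (ipow X f k z) (x k) \<le> 1) \<and>
                    tendsto0_both (\<lambda>k. dist (ipow X f k z) (x k)))" by blast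
  obtain r where r: "r > 0" "\<forall>a\<in>X. \<forall>b\<in>X. dist a b < r \<longrightarrow> dist (f a) (f b) < \<delta>"
    using unif_f \<delta> by blast
  have "\<forall>e>0. \<exists>a K'. chain e x0 u a \<and> chain e x0 ((f^^K') y) (a + K')"
    if uy: "u \<in> C" "y \<in> C" "dist u y < r" for u y
  proof (intro allI impI)
    fix e :: real assume e: "e > 0"
    have uX: "u \<in> X" and yX: "y \<in> X" using uy CX by auto
    define x where "x j = (if j \<le> 0 then ipow X f j u else (f^^nat j) y)" for j
    have xX: "\<forall>k. x k \<in> X" using ipowX fpowX uX yX by (simp add: x_def)
    have err: "dist (f (x k)) (x (k+1)) = (if k = 0 then dist (f u) (f y) else 0)" for k
    proof -
      consider "k < 0" | "k = 0" | "k > 0" by linarith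
      then show ?thesis
      proof cases
        case 1 then show ?thesis using ipow_f[OF uX, of k] by (simp add: x_def)
      next
        case 2 then show ?thesis by (simp add: x_def ipow_def)
      next
        case 3
        then have "nat (k+1) = Suc (nat k)" by simp
        then show ?thesis using 3 by (simp add: x_def)
      qed
    qed
    have "dist (f u) (f y) < \<delta>" using r(2) uy(3) uX yX by blast
    then have H1: "\<forall>k. dist (f (x k)) (x (k + 1)) \<le> \<delta>" using err \<delta> by simp
    have H2: "tendsto0_both (\<lambda>k. dist (f (x k)) (x (k + 1)))"
      unfolding tendsto0_both_def
    proof
      show "((\<lambda>k. dist (f (x k)) (x (k + 1))) \<longlongrightarrow> 0) at_top"
        by (rule t0_topI) (rule exI[of _ 1], simp add: err)
      show "((\<lambda>k. dist (f (x k)) (x (k + 1))) \<longlongrightarrow> 0) at_bot"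
        by (rule t0_botI) (rule exI[of _ "-1"], simp add: err)
    qed
    obtain z where zX: "z \<in> X" and T: "tendsto0_both (\<lambda>k. dist (ipow X f k z) (x k))"
      using Lsh[OF xX H1 H2] by blast
    have e2: "e/2 > 0" using e by simp
    have Tb: "((\<lambda>j. dist (ipow X f j z) (x j)) \<longlongrightarrow> 0) at_bot" using T unfolding tendsto0_both_def by simp
    have Tt: "((\<lambda>j. dist (ipow X f j z) (x j)) \<longlongrightarrow> 0) at_top" using T unfolding tendsto0_both_def by simp
    obtain N1 where N1: "\<forall>j\<le>N1. \<bar>dist (ipow X f j z) (x j)\<bar> < e/2"
      using t0_bot[OF Tb e2] by blast
    obtain N2 where N2: "\<forall>j\<ge>N2. \<bar>dist (ipow X f j z) (x j)\<bar> < e/2"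
      using t0_top[OF Tt e2] by blast
    define K where "K = nat (- min N1 0)"
    define K' where "K' = nat (max N2 1)"
    have K: "- int K \<le> N1" "- int K \<le> 0" unfolding K_def by auto
    have K': "int K' \<ge> N2" "int K' \<ge> 1" unfolding K'_def by auto
    have "\<bar>dist (ipow X f (- int K) z) (x (- int K))\<bar> < e/2" using N1 K(1) by blast
    then have d1: "dist ((g^^K) z) ((g^^K) u) < e/2"
      using ipow_neg[OF zX, of K] ipow_neg[OF uX, of K] by (simp add: x_def)
    have "\<bar>dist (ipow X f (int K') z) (x (int K'))\<bar> < e/2" using N2 K'(1) by blast
    then have d2: "dist ((f^^K') z) ((f^^K') y) < e/2"
      using K'(2) ipow_pos[of K' z] by (simp add: x_def)
    have gu: "(g^^K) u \<in> C" using C_gpow uy by blast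
    obtain c where "chain (e/2) x0 ((g^^K) u) c" using inC_to[OF gu e2] by blast
    then obtain m where m: "m \<ge> 1" "chain (e/2) x0 ((g^^K) u) (m + c)" using padL e2 by blast
    have c1: "chain e x0 ((g^^K) u) (m + c)" using chain_mono[OF m(2)] e by simp
    have "chain (e/2 + e/2) x0 ((g^^K) z) (m + c)"
      using chain_end[OF m(2) _ gpowX[OF zX], where e'="e/2"] m(1) d1 by (simp add: dist_commute)
    then have c2: "chain e x0 ((g^^K) z) (m + c)" by simp
    have o1: "chain e ((g^^K) u) u K" using chain_orbit[OF gpowX[OF uX] e, of K K] fgpow[OF uX, of K] by simp
    have o2: "chain (e/2) ((g^^K) z) ((f^^(K' + K)) ((g^^K) z)) (K' + K)"
      using chain_orbit[OF gpowX[OF zX] e2] by simp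
    have "(f^^(K' + K)) ((g^^K) z) = (f^^K') z" by (simp add: funpow_add fgpow zX)
    then have "chain (e/2 + e/2) ((g^^K) z) ((f^^K') y) (K' + K)"
      using chain_end[OF o2 _ fpowX[OF yX], where e'="e/2"] K' d2 by simp
    then have c3: "chain e ((g^^K) z) ((f^^K') y) (K' + K)" by simp
    have "chain e x0 u (m + c + K)" using chain_trans[OF c1 o1] .
    moreover have "chain e x0 ((f^^K') y) (m + c + K + K')" using chain_trans[OF c2 c3] by (simp add: add.commute add.left_commute)
    ultimately show "\<exists>a K'. chain e x0 u a \<and> chain e x0 ((f^^K') y) (a + K')" by blast
  qed
  then show ?thesis using r(1) by blast
qed

end

lemma Suc_mod_inj: "(i::nat) < n \<Longrightarrow> j < n \<Longrightarrow> Suc i mod n = Suc j mod n \<Longrightarrow> i = j"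
  using mod_cancel_nat[of i 1 n j] by simp

context LSC begin

lemma per_bound: "\<exists>M. \<forall>e>0. per e \<le> M"
proof -
  obtain r where r: "r > 0" and co: "\<And>u y e. u \<in> C \<Longrightarrow> y \<in> C \<Longrightarrow> dist u y < r \<Longrightarrow> e > 0 \<Longrightarrow>
     \<exists>a K'. chain e x0 u a \<and> chain e x0 ((f^^K') y) (a + K')"
    using coh by blast
  have "X \<subseteq> (\<Union>c\<in>X. ball c (r/2))" using r by auto
  then obtain F where F: "F \<subseteq> X" "finite F" "X \<subseteq> (\<Union>c\<in>F. ball c (r/2))"
    using compactE_image[OF compX, of X "\<lambda>c. ball c (r/2)"] by blast
  have "per e \<le> card F" if e: "e > 0" for e
  proof -
    define p where "p = per e"
    have ppos: "p > 0" using per_pos e p_def by simp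
    have fiX: "(f^^i) x0 \<in> X" for i using fpowX x0X by blast
    define \<beta> where "\<beta> i = (SOME c. c \<in> F \<and> (f^^i) x0 \<in> ball c (r/2))" for i
    have \<beta>: "\<beta> i \<in> F \<and> (f^^i) x0 \<in> ball (\<beta> i) (r/2)" for i
    proof -
      have "\<exists>c. c \<in> F \<and> (f^^i) x0 \<in> ball c (r/2)" using F(3) fiX by blast
      then show ?thesis unfolding \<beta>_def by (rule someI_ex)
    qed
    have "inj_on \<beta> {..<p}"
    proof (rule inj_onI)
      fix i j assume i: "i \<in> {..<p}" and j: "j \<in> {..<p}" and eq: "\<beta> i = \<beta> j"
      have "dist ((f^^i) x0) ((f^^j) x0) < r"
        using \<beta>[of i] \<beta>[of j] eq dist_triangle_half_r[of "\<beta> j" "(f^^i) x0" r "(f^^j) x0"]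
        by (simp add: dist_commute)
      moreover have Ci: "(f^^i) x0 \<in> C" and Cj: "(f^^j) x0 \<in> C" using C_fpow x0C by auto
      ultimately obtain a K' where a: "chain e x0 ((f^^i) x0) a" "chain e x0 ((f^^K') ((f^^j) x0)) (a + K')"
        using co e by blast
      have o1: "chain e x0 ((f^^i) x0) i" using chain_orbit[OF x0X e] .
      have o2: "chain e x0 ((f^^K') ((f^^j) x0)) (K' + j)"
        using chain_orbit[OF x0X e, of "K' + j"] by (simp add: funpow_add)
      have CK: "(f^^K') ((f^^j) x0) \<in> C" using C_fpow Cj by blast
      have m1: "a mod p = i mod p" using F1[OF e Ci a(1) o1] p_def by simp
      have m2: "(a + K') mod p = (K' + j) mod p" using F1[OF e CK a(2) o2] p_def by simp
      have "(i + K') mod p = (a + K') mod p" using m1 by (metis mod_add_left_eq)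
      then have "(i + K') mod p = (j + K') mod p" using m2 by (simp add: add.commute)
      then have "i mod p = j mod p" by (rule mod_cancel_nat)
      then show "i = j" using i j by simp
    qed
    moreover have "\<beta> ` {..<p} \<subseteq> F" using \<beta> by blast
    ultimately have "card {..<p} \<le> card F" using card_inj_on_le F(2) by blast
    then show ?thesis using p_def by simp
  qed
  then show ?thesis by blast
qed

definition np :: nat where "np = Max (per ` {e. e > 0})"

lemma per_fin: "finite (per ` {e. e > 0})"
proof -
  obtain M where "\<forall>e>0. per e \<le> M" using per_bound by blast
  then have "per ` {e. e > 0} \<subseteq> {..M}" by auto
  then show ?thesis using finite_subset by blast
qed

lemma np_in: "np \<in> per ` {e. e > 0}"
  unfolding np_def by (rule Max_in[OF per_fin]) (auto intro: exI[of _ 1])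

definition e0 :: real where "e0 = (SOME e. e > 0 \<and> per e = np)"

lemma e0: "e0 > 0 \<and> per e0 = np"
proof -
  have "\<exists>e. e > 0 \<and> per e = np" using np_in by auto
  then show ?thesis unfolding e0_def by (rule someI_ex)
qed

lemma e0_pos: "e0 > 0" using e0 by blast

lemma per_small: assumes "0 < e" "e \<le> e0" shows "per e = np"
proof -
  have "np dvd per e" using per_mono[OF assms] e0 by simp
  moreover have "per e \<le> np" unfolding np_def using per_fin assms(1) by (simp add: Max_ge)
  moreover have "per e > 0" using per_pos assms(1) by simp
  ultimately show ?thesis by (simp add: dvd_imp_le le_antisym)
qed

lemma np_pos: "np > 0" using per_pos e0 by fastforce

definition Cs :: "nat \<Rightarrow> 'a set" where "Cs i = {w \<in> C. \<exists>a. chain e0 x0 w a \<and> a mod np = i}"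

lemma Cs_C: "Cs i \<subseteq> C" unfolding Cs_def by blast

lemma Cs_mod: assumes "w \<in> Cs i" "0 < e" "e \<le> e0" "chain e x0 w b" shows "b mod np = i"
proof -
  obtain a where a: "w \<in> C" "chain e0 x0 w a" "a mod np = i" using assms(1) unfolding Cs_def by blast
  have "chain e0 x0 w b" using chain_mono[OF assms(4,3)] .
  then have "a mod per e0 = b mod per e0" using F1[OF e0_pos a(1) a(2)] by blast
  then show ?thesis using a e0 by simp
qed

lemma Cs_lt: "w \<in> Cs i \<Longrightarrow> i < np" unfolding Cs_def using np_pos by auto

lemma Cs_disj: assumes "w \<in> Cs i" "w \<in> Cs j" shows "i = j"
proof -
  obtain a where a: "chain e0 x0 w a" "a mod np = i" using assms(1) unfolding Cs_def by blast
  show ?thesis using Cs_mod[OF assms(2) e0_pos order_refl a(1)] a(2) by simp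
qed

lemma C_Cs: assumes "w \<in> C" shows "\<exists>i<np. w \<in> Cs i"
proof -
  obtain a where "chain e0 x0 w a" using inC_to[OF assms e0_pos] by blast
  then have "w \<in> Cs (a mod np)" using assms unfolding Cs_def by blast
  moreover have "a mod np < np" using np_pos by simp
  ultimately show ?thesis by blast
qed

lemma Cs_cover: "C = (\<Union>i<np. Cs i)" using C_Cs Cs_C by blast

lemma Cs_f: assumes "w \<in> Cs i" shows "f w \<in> Cs (Suc i mod np)"
proof -
  obtain a where a: "w \<in> C" "chain e0 x0 w a" "a mod np = i" using assms unfolding Cs_def by blast
  have "chain e0 x0 (f w) (Suc a)" using chain_step[OF a(2) fX[OF CX[OF a(1)]]] e0_pos by simp
  moreover have "Suc a mod np = Suc i mod np" using a(3) by (metis mod_Suc_eq)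
  ultimately show ?thesis using C_f[OF a(1)] unfolding Cs_def by blast
qed

lemma Cs_fpow: assumes "w \<in> Cs i" shows "(f^^k) w \<in> Cs ((i + k) mod np)"
proof (induction k)
  case 0 then show ?case using assms Cs_lt[OF assms] by simp
next
  case (Suc k)
  have "(f^^Suc k) w \<in> Cs (Suc ((i + k) mod np) mod np)" using Cs_f[OF Suc] by simp
  then show ?case by (metis add_Suc_right mod_Suc_eq)
qed

lemma Cs_img: assumes "i < np" shows "f ` Cs i = Cs (Suc i mod np)"
proof
  show "f ` Cs i \<subseteq> Cs (Suc i mod np)" using Cs_f by blast
  show "Cs (Suc i mod np) \<subseteq> f ` Cs i"
  proof
    fix w' assume w': "w' \<in> Cs (Suc i mod np)"
    then have w'C: "w' \<in> C" using Cs_C by blast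
    obtain j where j: "j < np" "g w' \<in> Cs j" using C_Cs[OF C_g[OF w'C]] by blast
    have "f (g w') = w'" using fg CX w'C by blast
    then have "w' \<in> Cs (Suc j mod np)" using Cs_f[OF j(2)] by simp
    then have "Suc j mod np = Suc i mod np" using Cs_disj w' by blast
    then have "j = i" using Suc_mod_inj j(1) assms by blast
    then show "w' \<in> f ` Cs i" using j \<open>f (g w') = w'\<close> by (metis imageI)
  qed
qed

lemma Cs_fn: assumes "i < np" shows "(f^^np) ` Cs i = Cs i"
proof
  show "(f^^np) ` Cs i \<subseteq> Cs i" using Cs_fpow[of _ i np] assms by auto
  show "Cs i \<subseteq> (f^^np) ` Cs i"
  proof
    fix w assume w: "w \<in> Cs i"
    then have wC: "w \<in> C" using Cs_C by blast
    obtain j where j: "j < np" "(g^^np) w \<in> Cs j" using C_Cs[OF C_gpow[OF wC]] by blast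
    have eq: "(f^^np) ((g^^np) w) = w" using fgpow CX wC by blast
    then have "w \<in> Cs ((j + np) mod np)" using Cs_fpow[OF j(2), of np] by simp
    then have "j = i" using Cs_disj w j(1) by simp
    then show "w \<in> (f^^np) ` Cs i" using j eq by (metis imageI)
  qed
qed

lemma coh_Cs: "\<exists>r>0. \<forall>u y i. u \<in> Cs i \<longrightarrow> y \<in> C \<longrightarrow> dist u y < r \<longrightarrow> y \<in> Cs i"
proof -
  obtain r where r: "r > 0" and co: "\<And>u y e. u \<in> C \<Longrightarrow> y \<in> C \<Longrightarrow> dist u y < r \<Longrightarrow> e > 0 \<Longrightarrow>
     \<exists>a K'. chain e x0 u a \<and> chain e x0 ((f^^K') y) (a + K')"
    using coh by blast
  have "y \<in> Cs i" if u: "u \<in> Cs i" and y: "y \<in> C" and d: "dist u y < r" for u y i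
  proof -
    obtain j where j: "j < np" "y \<in> Cs j" using C_Cs[OF y] by blast
    obtain a K' where a: "chain e0 x0 u a" "chain e0 x0 ((f^^K') y) (a + K')"
      using co[OF _ y d e0_pos] u Cs_C by blast
    have m1: "a mod np = i" using Cs_mod[OF u e0_pos order_refl a(1)] .
    have m2: "(a + K') mod np = (j + K') mod np"
      using Cs_mod[OF Cs_fpow[OF j(2)] e0_pos order_refl a(2)] by simp
    have "a mod np = j mod np" using m2 by (rule mod_cancel_nat)
    then show ?thesis using m1 j by simp
  qed
  then show ?thesis using r by blast
qed

end

context LS begin
lemma Lsh: assumes "\<eta> > 0" shows "\<exists>\<delta>>0. \<forall>x::int \<Rightarrow> 'a.
        (\<forall>k. x k \<in> X) \<and> (\<forall>k. dist (f (x k)) (x (k + 1)) \<le> \<delta>) \<and>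
        tendsto0_both (\<lambda>k. dist (f (x k)) (x (k + 1)))
        \<longrightarrow> (\<exists>z\<in>X. (\<forall>k. dist (ipow X f k z) (x k) \<le> \<eta>) \<and>
                    tendsto0_both (\<lambda>k. dist (ipow X f k z) (x k)))"
  using Ls[unfolded L_shadowing_def, rule_format, OF assms] .
end

context LSC begin

lemma closure_to: assumes w: "w \<in> closure (Cs i)" "w \<in> X" and e: "e > 0"
  shows "\<exists>a. chain e x0 w a \<and> a mod np = i"
proof -
  define e' where "e' = min (e/2) e0"
  have e': "e' > 0" "e' \<le> e0" "e' \<le> e/2" using e e0_pos by (auto simp: e'_def)
  obtain y where y: "y \<in> Cs i" "dist y w < e/2" using w(1) e unfolding closure_approachable
    by (meson half_gt_zero)
  have yC: "y \<in> C" using y Cs_C by blast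
  obtain a where "chain e' x0 y a" using inC_to[OF yC e'(1)] by blast
  then obtain m where m: "m \<ge> 1" "chain e' x0 y (m + a)" using padL e'(1) by blast
  have md: "(m + a) mod np = i" using Cs_mod[OF y(1) e'(1,2) m(2)] .
  have "chain (e' + e/2) x0 w (m + a)" using chain_end[OF m(2) _ w(2), where e'="e/2"] m(1) y(2) by simp
  then have "chain e x0 w (m + a)" by (rule chain_mono) (use e' in simp)
  then show ?thesis using md by blast
qed

lemma closure_from: assumes w: "w \<in> closure (Cs i)" "w \<in> X" and e: "e > 0"
  shows "\<exists>b. chain e w x0 b"
proof -
  obtain \<delta> where \<delta>: "\<delta> > 0" "\<forall>a\<in>X. \<forall>b\<in>X. dist a b < \<delta> \<longrightarrow> dist (f a) (f b) < e/2"
    using unif_f[of "e/2"] e by auto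
  define d where "d = min \<delta> (e/2)"
  have d: "d > 0" "d \<le> \<delta>" "d \<le> e/2" using \<delta> e by (auto simp: d_def)
  obtain y where y: "y \<in> Cs i" "dist y w < d" using w(1) d(1) unfolding closure_approachable by blast
  have yC: "y \<in> C" using y Cs_C by blast
  obtain b where "chain d y x0 b" using inC_from[OF yC d(1)] by blast
  then obtain m where m: "m \<ge> 1" "chain d y x0 (b + m)" using padR d(1) by blast
  have "dist (f w) (f y) < e/2" using \<delta>(2) y(2) d w(2) CX[OF yC] by (simp add: dist_commute)
  then have "chain (d + e/2) w x0 (b + m)" using chain_start[OF m(2) _ w(2)] m(1) by simp
  then have "chain e w x0 (b + m)" by (rule chain_mono) (use d in simp)
  then show ?thesis by blast
qed

lemma Cs_closed: "closed (Cs i)"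
proof -
  have "closure (Cs i) \<subseteq> Cs i"
  proof
    fix w assume w: "w \<in> closure (Cs i)"
    have "closure (Cs i) \<subseteq> X"
      using closure_minimal[of "Cs i" X] Cs_C CX compact_imp_closed[OF compX] by blast
    then have wX: "w \<in> X" using w by blast
    have "w \<in> C" unfolding inC_iff using wX closure_to[OF w wX] closure_from[OF w wX] by blast
    moreover obtain a where "chain e0 x0 w a \<and> a mod np = i" using closure_to[OF w wX e0_pos] by blast
    ultimately show "w \<in> Cs i" unfolding Cs_def by blast
  qed
  then show ?thesis using closure_subset_eq by blast
qed

lemma Cs_compact: "compact (Cs i)"
proof -
  have "Cs i = Cs i \<inter> X" using Cs_C CX by blast
  then show ?thesis using closed_Int_compact[OF Cs_closed[of i] compX] by simp
qed

lemma chain_mix: assumes u: "u \<in> Cs i" and v: "v \<in> Cs i" and e: "0 < e" "e \<le> e0"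
  shows "\<exists>N. \<forall>k\<ge>N. chain e u v (np * k)"
proof -
  have uC: "u \<in> C" and vC: "v \<in> C" using u v Cs_C by auto
  obtain d1 where d1: "chain e u x0 d1" using inC_from[OF uC e(1)] by blast
  obtain b where b: "chain e x0 v b" using inC_to[OF vC e(1)] by blast
  obtain a where a: "chain e x0 u a" using inC_to[OF uC e(1)] by blast
  have ma: "a mod np = i" using Cs_mod[OF u e a] .
  have mb: "b mod np = i" using Cs_mod[OF v e b] .
  have pe: "per e = np" using per_small[OF e] .
  have "np dvd a + d1" using per_dvd[OF e(1) chain_trans[OF a d1]] pe by simp
  then have "(d1 + a) mod np = 0" by (simp add: add.commute)
  then have "(d1 + b) mod np = 0" using ma mb by (metis mod_add_right_eq)
  then obtain l where l: "d1 + b = np * l" by (metis mod_eq_0_iff_dvd dvdE)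
  obtain N0 where N0: "\<And>k. k \<ge> N0 \<Longrightarrow> chain e x0 x0 (k * np)" using per_large[OF e(1)] pe by auto
  have "chain e u v (np * k)" if k: "k \<ge> l + N0" for k
  proof -
    have "chain e x0 x0 ((k - l) * np)" by (rule N0) (use k in simp)
    then have "chain e u v (d1 + (k - l) * np + b)" using chain_trans[OF chain_trans[OF d1] b] by blast
    moreover have "d1 + (k - l) * np + b = np * k"
    proof -
      have "d1 + (k - l) * np + b = np * l + np * (k - l)" using l by (simp add: algebra_simps)
      also have "\<dots> = np * k" using k by (simp add: add_mult_distrib2[symmetric])
      finally show ?thesis .
    qed
    ultimately show ?thesis by simp
  qed
  then show ?thesis by blast
qed

lemma unif_mix: assumes u: "u \<in> Cs i" and e: "0 < e" "e \<le> e0"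
  shows "\<exists>N. \<forall>v\<in>Cs i. \<forall>k\<ge>N. chain e u v (np * k)"
proof -
  have e2: "0 < e/2" "e/2 \<le> e0" using e by auto
  have "Cs i \<subseteq> (\<Union>c\<in>Cs i. ball c (e/2))" using e by auto
  then obtain F where F: "F \<subseteq> Cs i" "finite F" "Cs i \<subseteq> (\<Union>c\<in>F. ball c (e/2))"
    using compactE_image[OF Cs_compact, of "Cs i" "\<lambda>c. ball c (e/2)"] by blast
  define Nf where "Nf v = (SOME N. \<forall>k\<ge>N. chain (e/2) u v (np * k))" for v
  have Nf: "\<forall>k\<ge>Nf v. chain (e/2) u v (np * k)" if "v \<in> Cs i" for v
  proof -
    have "\<exists>N. \<forall>k\<ge>N. chain (e/2) u v (np * k)" using chain_mix[OF u that e2] .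
    then show ?thesis unfolding Nf_def by (rule someI_ex)
  qed
  define N where "N = Max (insert 1 (Nf ` F))"
  have NF: "Nf v \<le> N" "1 \<le> N" if "v \<in> F" for v unfolding N_def using F(2) that by auto
  have N1: "1 \<le> N" unfolding N_def using F(2) by auto
  have "chain e u v (np * k)" if v: "v \<in> Cs i" and k: "k \<ge> N" for v k
  proof -
    obtain c where c: "c \<in> F" "v \<in> ball c (e/2)" using F(3) v by blast
    have cC: "c \<in> Cs i" using c F(1) by blast
    have "chain (e/2) u c (np * k)" using Nf[OF cC] NF[OF c(1)] k by auto
    moreover have "1 \<le> np * k" using np_pos N1 k by (simp add: Suc_le_eq)
    moreover have "v \<in> X" using v Cs_C CX by blast
    moreover have "dist c v < e/2" using c(2) by (simp add: dist_commute)
    ultimately have "chain (e/2 + e/2) u v (np * k)" using chain_end by blast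
    then show ?thesis by simp
  qed
  then show ?thesis by blast
qed

end

context LSC begin

lemma mixing: "topologically_mixing (Cs i) (f^^np)"
  unfolding topologically_mixing_def
proof (intro allI impI)
  fix U V assume H: "openin (top_of_set (Cs i)) U \<and> openin (top_of_set (Cs i)) V \<and> U \<noteq> {} \<and> V \<noteq> {}"
  obtain u where uU: "u \<in> U" using H by blast
  obtain v where vV: "v \<in> V" using H by blast
  have UCs: "U \<subseteq> Cs i" and VCs: "V \<subseteq> Cs i" using H openin_imp_subset by blast+
  have u: "u \<in> Cs i" and v: "v \<in> Cs i" using uU vV UCs VCs by auto
  obtain \<rho>U where \<rho>U: "\<rho>U > 0" "\<forall>x'\<in>Cs i. dist x' u < \<rho>U \<longrightarrow> x' \<in> U"
    using H uU unfolding openin_euclidean_subtopology_iff by blast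
  obtain \<rho>V where \<rho>V: "\<rho>V > 0" "\<forall>x'\<in>Cs i. dist x' v < \<rho>V \<longrightarrow> x' \<in> V"
    using H vV unfolding openin_euclidean_subtopology_iff by blast
  obtain r where r: "r > 0" "\<forall>u y i. u \<in> Cs i \<longrightarrow> y \<in> C \<longrightarrow> dist u y < r \<longrightarrow> y \<in> Cs i"
    using coh_Cs by blast
  define \<eta> where "\<eta> = min (min \<rho>U \<rho>V) r / 2"
  have \<eta>: "\<eta> > 0" "\<eta> < \<rho>U" "\<eta> < \<rho>V" "\<eta> < r" using \<rho>U \<rho>V r by (auto simp: \<eta>_def)
  obtain \<delta> where \<delta>: "\<delta> > 0" and Lsh': "\<And>x::int \<Rightarrow> 'a.
        (\<forall>k. x k \<in> X) \<Longrightarrow> (\<forall>k. dist (f (x k)) (x (k + 1)) \<le> \<delta>) \<Longrightarrow>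
        tendsto0_both (\<lambda>k. dist (f (x k)) (x (k + 1)))
        \<Longrightarrow> (\<exists>z\<in>X. (\<forall>k. dist (ipow X f k z) (x k) \<le> \<eta>) \<and>
                    tendsto0_both (\<lambda>k. dist (ipow X f k z) (x k)))"
    using Lsh[OF \<eta>(1)] by blast
  define e where "e = min \<delta> e0"
  have e: "0 < e" "e \<le> e0" "e \<le> \<delta>" using \<delta> e0_pos by (auto simp: e_def)
  obtain N where N: "\<And>k. k \<ge> N \<Longrightarrow> chain e u v (np * k)" using chain_mix[OF u v e(1,2)] by blast
  have "((f^^np)^^k) ` U \<inter> V \<noteq> {}" if k: "k \<ge> N" for k
  proof -
    define L where "L = np * k"
    obtain q where q: "q 0 = u" "q L = v" "\<forall>j\<le>L. q j \<in> X" "\<forall>j<L. dist (f (q j)) (q (Suc j)) < e"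
      using N[OF k] unfolding chain_def L_def by blast
    have uX: "u \<in> X" and vX: "v \<in> X" using u v Cs_C CX by auto
    define x where "x j = (if j < 0 then ipow X f j u else if j \<le> int L then q (nat j) else (f^^(nat j - L)) v)" for j
    have xX: "\<forall>j. x j \<in> X" unfolding x_def using ipowX[OF uX] q(3) fpowX[OF vX] by auto
    have xL: "x (int L) = v" using q(2) by (simp add: x_def)
    have xL1: "x (int L + 1) = f v"
    proof -
      have "x (int L + 1) = (f^^(nat (int L + 1) - L)) v" by (simp add: x_def)
      also have "nat (int L + 1) - L = 1" by simp
      finally show ?thesis by simp
    qed
    have err0: "dist (f (x j)) (x (j + 1)) = 0" if "j < 0 \<or> j \<ge> int L" for j
    proof (cases "j < 0")
      case True
      have "x (j+1) = ipow X f (j+1) u"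
        using True q(1) by (auto simp: x_def ipow_def)
      then show ?thesis using True ipow_f[OF uX, of j] by (simp add: x_def)
    next
      case False
      then have jL: "j \<ge> int L" using that by simp
      show ?thesis
      proof (cases "j = int L")
        case True
        then show ?thesis using xL xL1 by simp
      next
        case False
        then have "nat (j + 1) - L = Suc (nat j - L)" using jL by linarith
        then show ?thesis using jL False by (simp add: x_def)
      qed
    qed
    have errlt: "dist (f (x j)) (x (j + 1)) < e" if "0 \<le> j" "j < int L" for j
    proof -
      have "x j = q (nat j)" "x (j+1) = q (Suc (nat j))" using that by (auto simp: x_def nat_add_distrib)
      then show ?thesis using q(4) that by auto
    qed
    have H1: "\<forall>j. dist (f (x j)) (x (j + 1)) \<le> \<delta>"
    proof
      fix j show "dist (f (x j)) (x (j + 1)) \<le> \<delta>"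
      proof (cases "j < 0 \<or> j \<ge> int L")
        case True then show ?thesis using err0[OF True] \<delta> by simp
      next
        case False then have "0 \<le> j" "j < int L" by auto
        then show ?thesis using errlt[of j] e by simp
      qed
    qed
    have H2: "tendsto0_both (\<lambda>j. dist (f (x j)) (x (j + 1)))"
      unfolding tendsto0_both_def
    proof
      show "((\<lambda>j. dist (f (x j)) (x (j + 1))) \<longlongrightarrow> 0) at_top"
        by (rule t0_topI) (rule exI[of _ "int L"], simp add: err0)
      show "((\<lambda>j. dist (f (x j)) (x (j + 1))) \<longlongrightarrow> 0) at_bot"
        by (rule t0_botI) (rule exI[of _ "-1"], simp add: err0)
    qed
    obtain z where zX: "z \<in> X" and zd: "\<forall>j. dist (ipow X f j z) (x j) \<le> \<eta>"
      and T: "tendsto0_both (\<lambda>j. dist (ipow X f j z) (x j))" using Lsh'[OF xX H1 H2] by blast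
    have J: "\<forall>j. (j \<le> - (int L + 1) \<or> j \<ge> int L + 1) \<longrightarrow> x j \<in> C"
    proof (intro allI impI)
      fix j assume "j \<le> - (int L + 1) \<or> j \<ge> int L + 1"
      then consider "j < 0" | "j > int L" by linarith
      then show "x j \<in> C"
      proof cases
        case 1 then show ?thesis using C_ipow[OF Cs_C[THEN subsetD, OF u]] by (simp add: x_def)
      next
        case 2 then show ?thesis using C_fpow[OF Cs_C[THEN subsetD, OF v]] by (simp add: x_def)
      qed
    qed
    have zC: "z \<in> C" using asym_C[OF zX J T] .
    have x0u: "x 0 = u" using q(1) by (simp add: x_def)
    have i0: "ipow X f 0 z = z" by (simp add: ipow_def)
    have "dist (ipow X f 0 z) (x 0) \<le> \<eta>" using zd by blast
    then have dzu: "dist z u \<le> \<eta>" using x0u i0 by simp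
    have du: "dist u z < r" using dzu \<eta>(4) by (simp add: dist_commute)
    have zCs: "z \<in> Cs i" using r(2)[rule_format, OF u zC du] .
    have "dist z u < \<rho>U" using dzu \<eta>(2) by simp
    then have zU: "z \<in> U" using \<rho>U(2) zCs by blast
    define w where "w = (f^^L) z"
    have iL: "ipow X f (int L) z = w" unfolding w_def by (rule ipow_pos)
    have "dist (ipow X f (int L) z) (x (int L)) \<le> \<eta>" using zd by blast
    then have dwv: "dist w v \<le> \<eta>" using iL xL by simp
    have dv: "dist v w < r" using dwv \<eta>(4) by (simp add: dist_commute)
    have wC: "w \<in> C" unfolding w_def using C_fpow zC by blast
    have wCs: "w \<in> Cs i" using r(2)[rule_format, OF v wC dv] .
    have "dist w v < \<rho>V" using dwv \<eta>(3) by simp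
    then have wV: "w \<in> V" using \<rho>V(2) wCs by blast
    have eqw: "((f^^np)^^k) z = w" unfolding w_def L_def by (simp only: funpow_mult)
    have "w \<in> ((f^^np)^^k) ` U" using zU eqw by (metis imageI)
    then have "w \<in> ((f^^np)^^k) ` U \<inter> V" using wV by (rule IntI)
    then show ?thesis by blast
  qed
  then show "\<exists>N. \<forall>k\<ge>N. ((f ^^ np) ^^ k) ` U \<inter> V \<noteq> {}" by blast
qed

end

lemma repr_div: fixes n k :: int and m :: nat assumes "n > 0" "int m < n"
  shows "(n * k + int m) div n = k" "(n * k + int m) mod n = int m"
  using assms by (simp_all add: add.commute)
lemma repr_ex: fixes n j :: int assumes "n > 0"
  obtains k m where "j = n * k + int m" "int m < n"
proof -
  have "j = n * (j div n) + int (nat (j mod n))" using assms by simp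
  moreover have "int (nat (j mod n)) < n" using assms by simp
  ultimately show ?thesis using that by blast
qed

context LS begin
lemma gfpow: "x \<in> X \<Longrightarrow> (g^^k) ((f^^k) x) = x"
proof (induction k arbitrary: x)
  case (Suc k) then show ?case by (simp add: funpow_Suc_right del: funpow.simps) (metis gf fX fpowX funpow_swap1)
qed simp
end

context LSC begin

lemma Cs_g: assumes "i < np" "w \<in> Cs i" shows "(g^^np) w \<in> Cs i \<and> (f^^np) ((g^^np) w) = w"
proof -
  obtain w' where w': "w' \<in> Cs i" "w = (f^^np) w'" using Cs_fn[OF assms(1)] assms(2) by blast
  have "(g^^np) w = w'" using gfpow w' Cs_C CX by blast
  then show ?thesis using w' by simp
qed

lemma inv_Cs: assumes "i < np" "w \<in> Cs i"
  shows "(inv_into (Cs i) (f^^np) ^^ m) w = (g^^(np * m)) w \<and> (g^^(np * m)) w \<in> Cs i"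
proof (induction m)
  case 0 then show ?case using assms by simp
next
  case (Suc m)
  define w1 where "w1 = (g^^(np * m)) w"
  have w1: "w1 \<in> Cs i" using Suc w1_def by simp
  have inj: "inj_on (f^^np) (Cs i)"
    by (rule inj_on_inverseI[where g="g^^np"]) (use gfpow Cs_C CX in blast)
  have g1: "(g^^np) w1 \<in> Cs i" "(f^^np) ((g^^np) w1) = w1" using Cs_g[OF assms(1) w1] by auto
  have "inv_into (Cs i) (f^^np) w1 = (g^^np) w1" using inv_into_f_eq[OF inj g1(1) g1(2)] .
  moreover have "(g^^(np * Suc m)) w = (g^^np) w1" unfolding w1_def
    by (simp add: funpow_add)
  ultimately show ?case using Suc g1 w1_def by simp
qed

lemma ipowCs: assumes "i < np" "z \<in> Cs i" shows "ipow (Cs i) (f^^np) k z = ipow X f (int np * k) z"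
proof (cases "k \<ge> 0")
  case True
  have "nat (int np * k) = np * nat k" using True by (simp add: nat_mult_distrib)
  then show ?thesis using True by (simp add: ipow_def funpow_mult mult_nonneg_nonneg)
next
  case False
  have zX: "z \<in> X" using assms Cs_C CX by blast
  define m where "m = nat (-k)"
  have km: "k = - int m" using False m_def by simp
  have "ipow (Cs i) (f^^np) k z = (g^^(np * m)) z" using inv_Cs[OF assms] False km by (simp add: ipow_def)
  moreover have "int np * k = - int (np * m)" using km by simp
  ultimately show ?thesis using ipow_neg[OF zX, of "np * m"] by simp
qed

end

context LSC begin

lemma tsls: assumes ilt: "i < np" shows "two_sided_limit_shadowing (Cs i) (f^^np)"
  unfolding two_sided_limit_shadowing_def
proof (intro allI impI)
  fix y :: "int \<Rightarrow> 'a"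
  assume Hy: "(\<forall>k. y k \<in> Cs i) \<and> tendsto0_both (\<lambda>k. dist ((f^^np) (y k)) (y (k+1)))"
  define E where "E k = dist ((f^^np) (y k)) (y (k+1))" for k
  have yCs: "y k \<in> Cs i" for k using Hy by blast
  have yC: "y k \<in> C" for k using yCs Cs_C by blast
  have yX: "y k \<in> X" for k using yC CX by blast
  have Et: "(E \<longlongrightarrow> 0) at_top" "(E \<longlongrightarrow> 0) at_bot" using Hy unfolding tendsto0_both_def E_def by auto
  have E0: "E k \<ge> 0" for k unfolding E_def by simp
  obtain \<delta> where \<delta>: "\<delta> > 0" and Lsh': "\<And>x::int \<Rightarrow> 'a.
        (\<forall>k. x k \<in> X) \<Longrightarrow> (\<forall>k. dist (f (x k)) (x (k + 1)) \<le> \<delta>) \<Longrightarrow>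
        tendsto0_both (\<lambda>k. dist (f (x k)) (x (k + 1)))
        \<Longrightarrow> (\<exists>z\<in>X. (\<forall>k. dist (ipow X f k z) (x k) \<le> 1) \<and>
                    tendsto0_both (\<lambda>k. dist (ipow X f k z) (x k)))"
    using Lsh[of 1] by auto
  define e where "e = min \<delta> e0"
  have e: "0 < e" "e \<le> e0" "e \<le> \<delta>" using \<delta> e0_pos by (auto simp: e_def)
  obtain K1 where K1: "\<forall>k\<ge>K1. \<bar>E k\<bar> < e" using t0_top[OF Et(1) e(1)] by blast
  obtain K2 where K2: "\<forall>k\<le>K2. \<bar>E k\<bar> < e" using t0_bot[OF Et(2) e(1)] by blast
  define K where "K = max (max K1 (-K2)) 0"
  have K0: "K \<ge> 0" unfolding K_def by simp
  have EK: "E k < e" if "k \<ge> K \<or> k \<le> -K" for k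
  proof -
    have "\<bar>E k\<bar> < e"
    proof (cases "k \<ge> K")
      case True then have "k \<ge> K1" unfolding K_def by simp
      then show ?thesis using K1 by blast
    next
      case False then have "k \<le> -K" using that by simp
      then have "k \<le> K2" unfolding K_def by simp
      then show ?thesis using K2 by blast
    qed
    then show ?thesis using E0[of k] by simp
  qed
  define A where "A = - K"
  obtain N where N: "\<forall>v\<in>Cs i. \<forall>k\<ge>N. chain e (y A) v (np * k)" using unif_mix[OF yCs e(1,2)] by blast
  define B where "B = K + int N"
  define M where "M = nat (B - A)"
  have MN: "M \<ge> N" unfolding M_def B_def A_def using K0 by simp
  have BA: "int M = B - A" unfolding M_def B_def A_def using K0 by simp
  have "chain e (y A) (y B) (np * M)" using N yCs MN by blast
  then obtain q where q: "q 0 = y A" "q (np * M) = y B" "\<forall>j\<le>np * M. q j \<in> X"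
    "\<forall>j<np * M. dist (f (q j)) (q (Suc j)) < e" unfolding chain_def by blast
  define n where "n = int np"
  have n0: "n > 0" "n \<ge> 1" using np_pos unfolding n_def by auto
  define a where "a = n * A"
  define b where "b = n * B"
  have ab: "nat (b - a) = np * M"
  proof -
    have "b - a = n * (B - A)" unfolding a_def b_def by (simp add: algebra_simps)
    also have "\<dots> = int (np * M)" using BA unfolding n_def by simp
    finally have "b - a = int (np * M)" .
    then show ?thesis by (simp only: nat_int)
  qed
  have AB: "A \<le> B" unfolding A_def B_def using K0 by simp
  have aleb: "a \<le> b" unfolding a_def b_def by (rule mult_left_mono[OF AB]) (use n0 in simp)
  define F where "F j = (f^^nat (j mod n)) (y (j div n))" for j
  have F_repr: "F (n * k + int m) = (f^^m) (y k)" if "int m < n" for k m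
    using repr_div[OF n0(1) that] unfolding F_def by simp
  have F_nk: "F (n * k) = y k" for k using F_repr[of 0 k] n0 by simp
  have FX: "F j \<in> X" for j unfolding F_def using fpowX yX by blast
  have FC: "F j \<in> C" for j unfolding F_def using C_fpow yC by blast
  define x where "x j = (if a < j \<and> j \<le> b then q (nat (j - a)) else F j)" for j
  have x_in: "x j = q (nat (j - a))" if "a \<le> j" "j \<le> b" for j
  proof (cases "j = a")
    case True then show ?thesis using F_nk[of A] q(1) unfolding x_def a_def by simp
  qed (use that in \<open>simp add: x_def\<close>)
  have x_out: "x j = F j" if "j \<le> a \<or> j \<ge> b" for j
  proof (cases "j = b")
    case True
    show ?thesis
    proof (cases "a < b")
      case True2: True
      then have "x j = q (np * M)" using ab True by (simp add: x_def)
      then show ?thesis using True q(2) F_nk[of B] unfolding b_def by simp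
    next
      case False then show ?thesis using True by (simp add: x_def)
    qed
  next
    case False then show ?thesis using that by (auto simp: x_def)
  qed
  have xX: "\<forall>j. x j \<in> X"
  proof
    fix j show "x j \<in> X"
    proof (cases "a < j \<and> j \<le> b")
      case True
      then have "nat (j - a) \<le> np * M" using ab by linarith
      then show ?thesis using True q(3) by (simp add: x_def)
    qed (auto simp: x_def FX)
  qed
  have err_in: "dist (f (x j)) (x (j + 1)) < e" if "a \<le> j" "j < b" for j
  proof -
    have "x j = q (nat (j - a))" using x_in that by simp
    moreover have "x (j + 1) = q (Suc (nat (j - a)))"
    proof -
      have "nat (j + 1 - a) = Suc (nat (j - a))" using that by linarith
      then show ?thesis using x_in[of "j+1"] that by simp
    qed
    moreover have "nat (j - a) < np * M" using ab that by linarith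
    ultimately show ?thesis using q(4) by simp
  qed
  have err_out: "\<exists>k. n * k \<le> j \<and> j < n * k + n \<and>
      (dist (f (x j)) (x (j + 1)) = 0 \<or> dist (f (x j)) (x (j + 1)) = E k)" if "j < a \<or> j \<ge> b" for j
  proof -
    have xj: "x j = F j" "x (j+1) = F (j+1)" using x_out that by auto
    obtain k m where km: "j = n * k + int m" "int m < n" using repr_ex[OF n0(1)] by blast
    have Fj: "F j = (f^^m) (y k)" using F_repr km by simp
    show ?thesis
    proof (cases "int (Suc m) < n")
      case True
      have "j + 1 = n * k + int (Suc m)" using km by simp
      moreover have "F (n * k + int (Suc m)) = (f^^Suc m) (y k)" using F_repr[OF True] .
      ultimately have "F (j+1) = (f^^Suc m) (y k)" by metis
      then have "dist (f (x j)) (x (j + 1)) = 0" using xj Fj by simp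
      then show ?thesis using km by (intro exI[of _ k]) auto
    next
      case False
      then have Sm: "Suc m = np" using km(2) unfolding n_def by simp
      have "j + 1 = n * (k + 1) + int 0" using km Sm unfolding n_def by (simp add: algebra_simps)
      moreover have "F (n * (k + 1) + int 0) = (f^^0) (y (k+1))" using F_repr[of 0 "k+1"] n0 by simp
      ultimately have "F (j+1) = y (k+1)" by (metis funpow_0)
      moreover have "f (F j) = (f^^np) (y k)" using Fj Sm by (metis funpow.simps(2) o_apply)
      ultimately have "dist (f (x j)) (x (j + 1)) = E k" using xj unfolding E_def by simp
      then show ?thesis using km by (intro exI[of _ k]) auto
    qed
  qed
  have out_lo: "k < A" if "n * k \<le> j" "j < a" for k j
  proof -
    have "n * k < n * A" using that unfolding a_def by simp
    then show ?thesis using n0 by (simp add: mult_less_cancel_left_pos)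
  qed
  have out_hi: "k \<ge> B" if "j < n * k + n" "j \<ge> b" for k j
  proof -
    have "n * B < n * (k + 1)" using that unfolding b_def by (simp add: algebra_simps)
    then show ?thesis using n0 by (simp add: mult_less_cancel_left_pos)
  qed
  have H1: "\<forall>j. dist (f (x j)) (x (j + 1)) \<le> \<delta>"
  proof
    fix j show "dist (f (x j)) (x (j + 1)) \<le> \<delta>"
    proof (cases "j < a \<or> j \<ge> b")
      case True
      then obtain k where k: "n * k \<le> j" "j < n * k + n"
        "dist (f (x j)) (x (j + 1)) = 0 \<or> dist (f (x j)) (x (j + 1)) = E k" using err_out by blast
      have "k \<ge> K \<or> k \<le> -K"
      proof (cases "j < a")
        case True then have "k < A" using out_lo k by blast
        then show ?thesis unfolding A_def by simp
      next
        case False then have "j \<ge> b" using \<open>j < a \<or> j \<ge> b\<close> by simp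
        then have "k \<ge> B" using out_hi k by blast
        then show ?thesis unfolding B_def by simp
      qed
      then have "E k < e" using EK by blast
      then show ?thesis using k(3) e \<delta> by auto
    next
      case False
      then show ?thesis using err_in[of j] e by simp
    qed
  qed
  have H2: "tendsto0_both (\<lambda>j. dist (f (x j)) (x (j + 1)))"
    unfolding tendsto0_both_def
  proof
    show "((\<lambda>j. dist (f (x j)) (x (j + 1))) \<longlongrightarrow> 0) at_top"
    proof (rule t0_topI)
      fix \<epsilon> :: real assume \<epsilon>: "\<epsilon> > 0"
      obtain K3 where K3: "\<forall>k\<ge>K3. \<bar>E k\<bar> < \<epsilon>" using t0_top[OF Et(1) \<epsilon>] by blast
      have "\<bar>dist (f (x j)) (x (j + 1))\<bar> < \<epsilon>" if j: "j \<ge> max b (n * K3)" for j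
      proof -
        obtain k where k: "n * k \<le> j" "j < n * k + n"
          "dist (f (x j)) (x (j + 1)) = 0 \<or> dist (f (x j)) (x (j + 1)) = E k" using err_out j by auto
        have "n * K3 < n * (k + 1)" using j k by (simp add: algebra_simps)
        then have "K3 < k + 1" using n0 by (simp add: mult_less_cancel_left_pos)
        then have "\<bar>E k\<bar> < \<epsilon>" using K3 by simp
        then show ?thesis using k(3) \<epsilon> by auto
      qed
      then show "\<exists>N. \<forall>j\<ge>N. \<bar>dist (f (x j)) (x (j + 1))\<bar> < \<epsilon>" by blast
    qed
    show "((\<lambda>j. dist (f (x j)) (x (j + 1))) \<longlongrightarrow> 0) at_bot"
    proof (rule t0_botI)
      fix \<epsilon> :: real assume \<epsilon>: "\<epsilon> > 0"
      obtain K4 where K4: "\<forall>k\<le>K4. \<bar>E k\<bar> < \<epsilon>" using t0_bot[OF Et(2) \<epsilon>] by blast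
      have "\<bar>dist (f (x j)) (x (j + 1))\<bar> < \<epsilon>" if j: "j \<le> min (a - 1) (n * K4)" for j
      proof -
        obtain k where k: "n * k \<le> j" "j < n * k + n"
          "dist (f (x j)) (x (j + 1)) = 0 \<or> dist (f (x j)) (x (j + 1)) = E k" using err_out j by auto
        have "n * k \<le> n * K4" using j k(1) by linarith
        then have "k \<le> K4" using n0 by (simp add: mult_le_cancel_left_pos)
        then have "\<bar>E k\<bar> < \<epsilon>" using K4 by simp
        then show ?thesis using k(3) \<epsilon> by auto
      qed
      then show "\<exists>N. \<forall>j\<le>N. \<bar>dist (f (x j)) (x (j + 1))\<bar> < \<epsilon>" by blast
    qed
  qed
  obtain z where zX: "z \<in> X" and T: "tendsto0_both (\<lambda>j. dist (ipow X f j z) (x j))"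
    using Lsh'[OF xX H1 H2] by blast
  have Tt: "((\<lambda>j. dist (ipow X f j z) (x j)) \<longlongrightarrow> 0) at_top"
    and Tb: "((\<lambda>j. dist (ipow X f j z) (x j)) \<longlongrightarrow> 0) at_bot" using T unfolding tendsto0_both_def by auto
  define J where "J = \<bar>a\<bar> + \<bar>b\<bar> + 1"
  have J: "\<forall>j. (j \<le> -J \<or> j \<ge> J) \<longrightarrow> x j \<in> C"
  proof (intro allI impI)
    fix j assume "j \<le> -J \<or> j \<ge> J"
    then have "j \<le> a \<or> j \<ge> b" unfolding J_def by linarith
    then show "x j \<in> C" using x_out FC by simp
  qed
  have zC: "z \<in> C" using asym_C[OF zX J T] .
  have xnk: "x (n * k) = y k" if "k \<ge> B \<or> k \<le> A" for k
  proof -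
    have "n * k \<ge> b \<or> n * k \<le> a" using that n0 unfolding a_def b_def by (auto simp: mult_left_mono)
    then have "x (n * k) = F (n * k)" using x_out by blast
    then show ?thesis using F_nk by simp
  qed
  have ipn: "ipow X f (n * k) z = (f^^(np * nat k)) z" if "k \<ge> 0" for k
  proof -
    have "n * k = int (np * nat k)" using that unfolding n_def by simp
    then show ?thesis using ipow_pos[of "np * nat k" z] by metis
  qed
  obtain r where r: "r > 0" "\<forall>u y i. u \<in> Cs i \<longrightarrow> y \<in> C \<longrightarrow> dist u y < r \<longrightarrow> y \<in> Cs i"
    using coh_Cs by blast
  have zCs: "z \<in> Cs i"
  proof -
    obtain N5 where N5: "\<forall>j\<ge>N5. \<bar>dist (ipow X f j z) (x j)\<bar> < r" using t0_top[OF Tt r(1)] by blast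
    define k0 where "k0 = max B \<bar>N5\<bar>"
    have k0: "k0 \<ge> B" "k0 \<ge> 0" "k0 \<ge> N5" unfolding k0_def by auto
    have "k0 \<le> n * k0" using mult_right_mono[of 1 n k0] n0 k0 by simp
    then have "n * k0 \<ge> N5" using k0 by linarith
    then have "dist (ipow X f (n * k0) z) (x (n * k0)) < r" using N5 by auto
    then have d: "dist (y k0) ((f^^(np * nat k0)) z) < r" using xnk[of k0] k0 ipn[of k0] by (simp add: dist_commute)
    have wC: "(f^^(np * nat k0)) z \<in> C" using C_fpow zC by blast
    have wCs: "(f^^(np * nat k0)) z \<in> Cs i" using r(2)[rule_format, OF yCs wC d] .
    obtain j' where j': "j' < np" "z \<in> Cs j'" using C_Cs[OF zC] by blast
    have "(f^^(np * nat k0)) z \<in> Cs ((j' + np * nat k0) mod np)" using Cs_fpow[OF j'(2)] .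
    then have "(f^^(np * nat k0)) z \<in> Cs j'" using j'(1) by simp
    then have "i = j'" using Cs_disj wCs by blast
    then show ?thesis using j' by simp
  qed
  have eqd: "dist (ipow (Cs i) (f^^np) k z) (y k) = dist (ipow X f (n * k) z) (x (n * k))"
    if "k \<ge> B \<or> k \<le> A" for k
    using ipowCs[OF ilt zCs, of k] xnk[OF that] unfolding n_def by simp
  have "tendsto0_both (\<lambda>k. dist (ipow (Cs i) (f^^np) k z) (y k))"
    unfolding tendsto0_both_def
  proof
    show "((\<lambda>k. dist (ipow (Cs i) (f^^np) k z) (y k)) \<longlongrightarrow> 0) at_top"
    proof (rule t0_topI)
      fix \<epsilon> :: real assume \<epsilon>: "\<epsilon> > 0"
      obtain N6 where N6: "\<forall>j\<ge>N6. \<bar>dist (ipow X f j z) (x j)\<bar> < \<epsilon>" using t0_top[OF Tt \<epsilon>] by blast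
      have "\<bar>dist (ipow (Cs i) (f^^np) k z) (y k)\<bar> < \<epsilon>" if k: "k \<ge> max B \<bar>N6\<bar>" for k
      proof -
        have "k \<ge> 0" using k abs_ge_zero[of N6] by linarith
        then have "k \<le> n * k" using mult_right_mono[of 1 n k] n0 by simp
        then have "n * k \<ge> N6" using k abs_ge_self[of N6] by linarith
        then show ?thesis using N6 eqd[of k] k by simp
      qed
      then show "\<exists>N. \<forall>k\<ge>N. \<bar>dist (ipow (Cs i) (f^^np) k z) (y k)\<bar> < \<epsilon>" by blast
    qed
    show "((\<lambda>k. dist (ipow (Cs i) (f^^np) k z) (y k)) \<longlongrightarrow> 0) at_bot"
    proof (rule t0_botI)
      fix \<epsilon> :: real assume \<epsilon>: "\<epsilon> > 0"
      obtain N7 where N7: "\<forall>j\<le>N7. \<bar>dist (ipow X f j z) (x j)\<bar> < \<epsilon>" using t0_bot[OF Tb \<epsilon>] by blast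
      have "\<bar>dist (ipow (Cs i) (f^^np) k z) (y k)\<bar> < \<epsilon>" if k: "k \<le> min A (- \<bar>N7\<bar>)" for k
      proof -
        have "k \<le> 0" using k abs_ge_zero[of N7] by linarith
        then have "n * k \<le> 1 * k" using mult_right_mono_neg[of 1 n k] n0 by simp
        then have "n * k \<le> N7" using k abs_ge_minus_self[of N7] by linarith
        then show ?thesis using N7 eqd[of k] k by simp
      qed
      then show "\<exists>N. \<forall>k\<le>N. \<bar>dist (ipow (Cs i) (f^^np) k z) (y k)\<bar> < \<epsilon>" by blast
    qed
  qed
  then show "\<exists>z\<in>Cs i. tendsto0_both (\<lambda>k. dist (ipow (Cs i) (f ^^ np) k z) (y k))" using zCs by blast
qed

end


theorem theoremE:
  fixes X :: "'a::metric_space set" and f :: "'a \<Rightarrow> 'a" and C :: "'a set"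
  assumes "compact X"
    and "\<exists>g. homeomorphism X X f g"
    and "L_shadowing X f"
    and "chain_recurrent_class X f C"
  shows "\<exists>n::nat. \<exists>Cs::nat \<Rightarrow> 'a set. n \<ge> 1 \<and>
     (\<forall>i<n. compact (Cs i) \<and> Cs i \<subseteq> C \<and> (f ^^ n) ` Cs i = Cs i) \<and>
     (\<forall>i<n. \<forall>j<n. i \<noteq> j \<longrightarrow> Cs i \<inter> Cs j = {}) \<and>
     C = (\<Union>i<n. Cs i) \<and>
     (\<forall>i<n. f ` Cs i = Cs (Suc i mod n)) \<and>
     (\<forall>i<n. topologically_mixing (Cs i) (f ^^ n) \<and>
            two_sided_limit_shadowing (Cs i) (f ^^ n))"
proof -
  obtain g where hom: "homeomorphism X X f g" using assms(2) by blast
  obtain x0 where x0: "x0 \<in> X" "x0 \<in> chain_class X f x0" "C = chain_class X f x0"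
    using assms(4) unfolding chain_recurrent_class_def by blast
  have lsc: "LSC X f g x0"
    by (intro LSC.intro LS.intro LSC_axioms.intro) (use assms(1,3) hom x0 in auto)
  define n where "n = LSC.np X f x0"
  define Cs where "Cs = LSC.Cs X f x0"
  have n1: "n \<ge> 1" using LSC.np_pos[OF lsc] unfolding n_def by simp
  have P1: "\<forall>i<n. compact (Cs i) \<and> Cs i \<subseteq> C \<and> (f ^^ n) ` Cs i = Cs i"
    using LSC.Cs_compact[OF lsc] LSC.Cs_C[OF lsc] LSC.Cs_fn[OF lsc] x0(3) unfolding n_def Cs_def by blast
  have P2: "\<forall>i<n. \<forall>j<n. i \<noteq> j \<longrightarrow> Cs i \<inter> Cs j = {}"
    using LSC.Cs_disj[OF lsc] unfolding Cs_def by blast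
  have P3: "C = (\<Union>i<n. Cs i)" using LSC.Cs_cover[OF lsc] x0(3) unfolding n_def Cs_def by simp
  have P4: "\<forall>i<n. f ` Cs i = Cs (Suc i mod n)" using LSC.Cs_img[OF lsc] unfolding n_def Cs_def by blast
  have P5: "\<forall>i<n. topologically_mixing (Cs i) (f ^^ n) \<and> two_sided_limit_shadowing (Cs i) (f ^^ n)"
    using LSC.mixing[OF lsc] LSC.tsls[OF lsc] unfolding n_def Cs_def by blast
  show ?thesis using n1 P1 P2 P3 P4 P5 by blast
qed

end
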